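(* Let $X$, $Y$ be locally compact, $\sigma$-compact Polish spaces and let $k\geq 0$ be an integer. Let $\mu\in M_+(X)$ be a finite nonnegative Borel measure and $\nu\in P_k(Y)$. Suppose $L$ is a nonnegative continuous linear functional on $C_{b,k}(X\times Y)$ such that for all $u\in C_{b,k}(X)$ and $v\in C_{b,k}(Y)$, $$\langle L, u(x)+v(y)\rangle=\int_X u\,d\mu+\int_Y v\,d\nu .$$ Then $\mu\in P_k(X)$, and $L$ is (given by integration against) a probability measure in $P_k(X\times Y)$ which belongs to $\Pi(\mu,\nu)$.
   Context: For a Polish space $Z$, $\|z\|_Z$ denotes the distance from $z$ to a fixed reference point of $Z$; on $X\times Y$ one uses $\|x\|_X+\|y\|_Y$. For an integer $k\ge 0$, $C_{b,k}(Z)$ is the Banach space of continuous $u:Z\to\mathbb{R}$ with $\|u\|_{b,k}=\sup_{z}\frac{|u(z)|}{1+\|z\|_Z^k}<\infty$ (on $X\times Y$ the weight is $1+(\|x\|_X+\|y\|_Y)^k$). $P_k(Z)$ is the set of Borel probability measures $\eta$ on $Z$ with $\int\|z\|_Z^k\,d\eta<\infty$ ($P_0=P$). $\Pi(\mu,\nu)$ is the set of probability measures on $X\times Y$ with marginals $\mu$ and $\nu$. A functional $L$ is nonnegative if $\langle L,p\rangle\ge0$ whenever $p\ge0$. *)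

theory Defs
  imports "HOL-Analysis.Analysis" "HOL-Probability.Probability"
begin

definition loc_compact_type :: "'a::topological_space itself \<Rightarrow> bool" where
  "loc_compact_type _ \<longleftrightarrow> (\<forall>x::'a. \<exists>U K. open U \<and> compact K \<and> x \<in> U \<and> U \<subseteq> K)"

definition sigma_compact_type :: "'a::topological_space itself \<Rightarrow> bool" where
  "sigma_compact_type _ \<longleftrightarrow> (\<exists>K::nat \<Rightarrow> 'a set. (\<forall>n. compact (K n)) \<and> (\<Union>n. K n) = UNIV)"

text \<open>The space C_{b,k} w.r.t. a weight function w (w z = norm of z), and its norm.\<close>
definition Cbk :: "('z::topological_space \<Rightarrow> real) \<Rightarrow> nat \<Rightarrow> ('z \<Rightarrow> real) set" where
  "Cbk w k = {u. continuous_on UNIV u \<and> (\<exists>C. \<forall>z. \<bar>u z\<bar> \<le> C * (1 + w z ^ k))}"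

definition norm_bk :: "('z \<Rightarrow> real) \<Rightarrow> nat \<Rightarrow> ('z \<Rightarrow> real) \<Rightarrow> real" where
  "norm_bk w k u = (SUP z. \<bar>u z\<bar> / (1 + w z ^ k))"

definition nX :: "'a::metric_space \<Rightarrow> 'a \<Rightarrow> real" where "nX x0 x = dist x x0"

definition nXY :: "'a::metric_space \<Rightarrow> 'b::metric_space \<Rightarrow> 'a \<times> 'b \<Rightarrow> real" where
  "nXY x0 y0 z = dist (fst z) x0 + dist (snd z) y0"

definition Pk :: "('z::topological_space \<Rightarrow> real) \<Rightarrow> nat \<Rightarrow> 'z measure set" where
  "Pk w k = {\<eta>. sets \<eta> = sets borel \<and> prob_space \<eta> \<and>
              (\<integral>\<^sup>+ z. ennreal (w z ^ k) \<partial>\<eta>) < \<infinity>}"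

end

theory Submission
  imports Defs
begin


definition bcont :: "('z::topological_space \<Rightarrow> real) set" where
  "bcont = {f. continuous_on UNIV f \<and> (\<exists>B. \<forall>z. \<bar>f z\<bar> \<le> B)}"

lemma bcontI: "continuous_on UNIV f \<Longrightarrow> (\<And>z. \<bar>f z\<bar> \<le> B) \<Longrightarrow> f \<in> bcont"
  unfolding bcont_def by blast

lemma bcontE: assumes "f \<in> bcont" obtains B where "continuous_on UNIV f" "\<And>z. \<bar>f z\<bar> \<le> B"
  using assms unfolding bcont_def by blast

lemma bcont_const[simp]: "(\<lambda>z. c) \<in> bcont"
  by (rule bcontI[where B="\<bar>c\<bar>"]) (auto intro: continuous_intros)

lemma bcont_lin: assumes "f \<in> bcont" "g \<in> bcont" shows "(\<lambda>z. a * f z + b * g z) \<in> bcont"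
proof -
  obtain B where B: "continuous_on UNIV f" "\<And>z. \<bar>f z\<bar> \<le> B" using assms(1) unfolding bcont_def by blast
  obtain C where C: "continuous_on UNIV g" "\<And>z. \<bar>g z\<bar> \<le> C" using assms(2) unfolding bcont_def by blast
  show ?thesis
  proof (rule bcontI[where B="\<bar>a\<bar>*B + \<bar>b\<bar>*C"])
    show "continuous_on UNIV (\<lambda>z. a * f z + b * g z)" using B C by (auto intro!: continuous_intros)
    fix z
    have "\<bar>a * f z + b * g z\<bar> \<le> \<bar>a\<bar> * \<bar>f z\<bar> + \<bar>b\<bar> * \<bar>g z\<bar>" by (simp add: abs_mult abs_triangle_ineq[THEN order_trans])
    also have "\<dots> \<le> \<bar>a\<bar>*B + \<bar>b\<bar>*C" using B(2)[of z] C(2)[of z] by (intro add_mono mult_left_mono) auto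
    finally show "\<bar>a * f z + b * g z\<bar> \<le> \<bar>a\<bar>*B + \<bar>b\<bar>*C" .
  qed
qed

lemma bcont_add: "f \<in> bcont \<Longrightarrow> g \<in> bcont \<Longrightarrow> (\<lambda>z. f z + g z) \<in> bcont"
  using bcont_lin[of f g 1 1] by simp
lemma bcont_diff: "f \<in> bcont \<Longrightarrow> g \<in> bcont \<Longrightarrow> (\<lambda>z. f z - g z) \<in> bcont"
  using bcont_lin[of f g 1 "-1"] by simp
lemma bcont_scale: "f \<in> bcont \<Longrightarrow> (\<lambda>z. a * f z) \<in> bcont"
  using bcont_lin[of f f a 0] by simp

lemma bcont_sum: "finite A \<Longrightarrow> (\<And>i. i \<in> A \<Longrightarrow> f i \<in> bcont) \<Longrightarrow> (\<lambda>z. \<Sum>i\<in>A. f i z) \<in> bcont"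
  by (induction A rule: finite_induct) (auto intro: bcont_add)

lemma bcont_min: assumes "f \<in> bcont" "g \<in> bcont" shows "(\<lambda>z. min (f z) (g z)) \<in> bcont"
proof -
  obtain B where B: "continuous_on UNIV f" "\<And>z. \<bar>f z\<bar> \<le> B" using assms(1) unfolding bcont_def by blast
  obtain C where C: "continuous_on UNIV g" "\<And>z. \<bar>g z\<bar> \<le> C" using assms(2) unfolding bcont_def by blast
  show ?thesis
  proof (rule bcontI[where B="B + C"])
    show "continuous_on UNIV (\<lambda>z. min (f z) (g z))" using B(1) C(1) by (intro continuous_on_min)
    fix z show "\<bar>min (f z) (g z)\<bar> \<le> B + C" using B(2)[of z] C(2)[of z] by (auto simp: abs_le_iff min_def)
  qed
qed

lemma bcont_max: assumes "f \<in> bcont" "g \<in> bcont" shows "(\<lambda>z. max (f z) (g z)) \<in> bcont"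
proof -
  obtain B where B: "continuous_on UNIV f" "\<And>z. \<bar>f z\<bar> \<le> B" using assms(1) unfolding bcont_def by blast
  obtain C where C: "continuous_on UNIV g" "\<And>z. \<bar>g z\<bar> \<le> C" using assms(2) unfolding bcont_def by blast
  show ?thesis
  proof (rule bcontI[where B="B + C"])
    show "continuous_on UNIV (\<lambda>z. max (f z) (g z))" using B(1) C(1) by (intro continuous_on_max)
    fix z show "\<bar>max (f z) (g z)\<bar> \<le> B + C" using B(2)[of z] C(2)[of z] by (auto simp: abs_le_iff max_def)
  qed
qed

lemma bcont_measurable: "f \<in> bcont \<Longrightarrow> f \<in> borel_measurable borel"
  by (auto elim!: bcontE intro: borel_measurable_continuous_onI)

lemma bcont_integrable: assumes "f \<in> bcont" "finite_measure M" "sets M = sets borel"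
  shows "integrable M f"
proof -
  obtain B where B: "continuous_on UNIV f" "\<And>z. \<bar>f z\<bar> \<le> B" using assms(1) unfolding bcont_def by blast
  interpret finite_measure M by fact
  show ?thesis
    using B assms(1) by (intro integrable_const_bound[where B=B])
      (auto simp: measurable_cong_sets[OF assms(3) refl] bcont_measurable)
qed

lemma min_sum_le:
  fixes a :: real
  assumes "finite A" "0 \<le> a" "\<And>i. i \<in> A \<Longrightarrow> 0 \<le> b i"
  shows "min a (\<Sum>i\<in>A. b i) \<le> (\<Sum>i\<in>A. min a (b i))"
  using assms
proof (induction A rule: finite_induct)
  case (insert x F)
  have "0 \<le> sum b F" using insert by (auto intro: sum_nonneg)
  then have "min a (b x + sum b F) \<le> min a (b x) + min a (sum b F)" using insert.prems(2)[of x] \<open>0 \<le> sum b F\<close> insert.prems(1) by (simp add: min_def)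
  also have "\<dots> \<le> min a (b x) + (\<Sum>i\<in>F. min a (b i))" using insert by auto
  finally show ?case using insert by simp
qed simp

lemma clamp_sum:
  fixes s :: real
  shows "(\<Sum>i<n. min 1 (max 0 (s - real i))) = min (real n) (max 0 s)"
  by (induction n) auto

locale riesz =
  fixes I :: "('z::metric_space \<Rightarrow> real) \<Rightarrow> real"
  assumes lin: "\<And>f g a b. f \<in> bcont \<Longrightarrow> g \<in> bcont \<Longrightarrow> I (\<lambda>z. a * f z + b * g z) = a * I f + b * I g"
    and pos: "\<And>f. f \<in> bcont \<Longrightarrow> (\<forall>z. 0 \<le> f z) \<Longrightarrow> 0 \<le> I f"
    and one: "I (\<lambda>z. 1) = 1"
    and dan: "\<And>f. (\<forall>n. f n \<in> bcont) \<Longrightarrow> (\<forall>n z. 0 \<le> f n z) \<Longrightarrow> (\<forall>n z. f (Suc n) z \<le> f n z)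
               \<Longrightarrow> (\<forall>z. (\<lambda>n. f n z) \<longlonglongrightarrow> 0) \<Longrightarrow> (\<lambda>n. I (f n)) \<longlonglongrightarrow> 0"
begin

lemma I_add: "f \<in> bcont \<Longrightarrow> g \<in> bcont \<Longrightarrow> I (\<lambda>z. f z + g z) = I f + I g"
  using lin[of f g 1 1] by simp
lemma I_diff: "f \<in> bcont \<Longrightarrow> g \<in> bcont \<Longrightarrow> I (\<lambda>z. f z - g z) = I f - I g"
  using lin[of f g 1 "-1"] by simp
lemma I_scale: "f \<in> bcont \<Longrightarrow> I (\<lambda>z. a * f z) = a * I f"
  using lin[of f f a 0] by simp
lemma I_zero: "I (\<lambda>z. 0) = 0"
  using I_scale[of "\<lambda>z. 1" 0] by simp
lemma I_mono: assumes "f \<in> bcont" "g \<in> bcont" "\<And>z. f z \<le> g z" shows "I f \<le> I g"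
  using pos[of "\<lambda>z. g z - f z"] assms by (simp add: I_diff bcont_diff)
lemma I_sum: "finite A \<Longrightarrow> (\<And>i. i \<in> A \<Longrightarrow> f i \<in> bcont) \<Longrightarrow> I (\<lambda>z. \<Sum>i\<in>A. f i z) = (\<Sum>i\<in>A. I (f i))"
proof (induction A rule: finite_induct)
  case empty then show ?case by (simp add: I_zero)
next
  case (insert x F)
  then show ?case by (simp add: I_add bcont_sum)
qed
lemma I_le_one: "f \<in> bcont \<Longrightarrow> (\<And>z. f z \<le> 1) \<Longrightarrow> I f \<le> 1"
  using I_mono[of f "\<lambda>z. 1"] one by simp

end


context riesz begin

definition FU :: "'z set \<Rightarrow> ('z \<Rightarrow> real) set" where
  "FU U = {f \<in> bcont. \<forall>z. 0 \<le> f z \<and> f z \<le> indicator U z}"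

definition m :: "'z set \<Rightarrow> ennreal" where
  "m U = (SUP f\<in>FU U. ennreal (I f))"

definition om :: "'z set \<Rightarrow> ennreal" where
  "om A = (INF U\<in>{U. open U \<and> A \<subseteq> U}. m U)"

lemma FU_mono: "U \<subseteq> V \<Longrightarrow> FU U \<subseteq> FU V"
  unfolding FU_def indicator_def by (auto split: if_splits) (metis order.trans zero_le_one)

lemma m_mono: "U \<subseteq> V \<Longrightarrow> m U \<le> m V"
  unfolding m_def by (rule SUP_subset_mono[OF FU_mono]) auto

lemma I_le_m: "f \<in> FU U \<Longrightarrow> ennreal (I f) \<le> m U"
  unfolding m_def by (rule SUP_upper)

lemma FU_le1: "f \<in> FU U \<Longrightarrow> f z \<le> 1"
  unfolding FU_def by (auto intro: order_trans[OF _ indicator_le_1])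

lemma m_le_1: "m U \<le> 1"
  unfolding m_def by (rule SUP_least) (use I_le_one FU_le1 in \<open>auto simp: FU_def\<close>)

lemma m_UNIV: "m UNIV = 1"
proof (rule antisym[OF m_le_1])
  have "(\<lambda>z. 1) \<in> FU UNIV" by (auto simp: FU_def)
  then show "1 \<le> m UNIV" using I_le_m[of "\<lambda>z. 1" UNIV] one by simp
qed

lemma m_empty: "m {} = 0"
proof -
  have "f \<in> FU {} \<Longrightarrow> I f = 0" for f
  proof -
    assume "f \<in> FU {}"
    then have "f = (\<lambda>z. 0)" by (auto simp: FU_def intro!: antisym le_funI)
    then show ?thesis by (simp add: I_zero)
  qed
  then show ?thesis unfolding m_def by (auto intro!: antisym SUP_least)
qed

lemma om_le_m: "open U \<Longrightarrow> A \<subseteq> U \<Longrightarrow> om A \<le> m U"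
  unfolding om_def by (rule INF_lower) auto

lemma om_open: "open U \<Longrightarrow> om U = m U"
  unfolding om_def by (auto intro!: antisym INF_lower INF_greatest m_mono)

lemma om_mono: "A \<subseteq> B \<Longrightarrow> om A \<le> om B"
  unfolding om_def by (rule INF_superset_mono) auto

lemma om_empty: "om {} = 0"
  using om_le_m[of "{}" "{}"] m_empty by simp

lemma om_le_1: "om A \<le> 1"
  using om_le_m[of UNIV A] m_UNIV by simp

end


context riesz begin

lemma m_countable_subadd:
  assumes opn: "\<And>n. open (U n)"
  shows "m (\<Union>n. U n) \<le> (\<Sum>n. m (U n))"
  unfolding m_def[of "\<Union>n. U n"]
proof (rule SUP_least)
  fix f assume f: "f \<in> FU (\<Union>n. U n)"
  then have fb: "f \<in> bcont" and f0: "\<And>z. 0 \<le> f z" and fle: "\<And>z. f z \<le> indicator (\<Union>n. U n) z"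
    by (auto simp: FU_def)
  define h where "h i z = (if U i = UNIV then 1 else min 1 (infdist z (- U i)))" for i z
  have h0: "0 \<le> h i z" for i z by (auto simp: h_def infdist_nonneg)
  have h1: "h i z \<le> 1" for i z by (auto simp: h_def)
  have hout: "z \<notin> U i \<Longrightarrow> h i z = 0" for i z by (auto simp: h_def)
  have hpos: "z \<in> U i \<Longrightarrow> 0 < h i z" for i z
    using opn[of i] by (auto simp: h_def intro!: infdist_pos_not_in_closed)
  have hb: "h i \<in> bcont" for i
  proof (rule bcontI[where B=1])
    show "continuous_on UNIV (h i)"
      by (cases "U i = UNIV") (auto simp: h_def[abs_def] intro!: continuous_intros)
    fix z show "\<bar>h i z\<bar> \<le> 1" using h0[of i z] h1[of i z] by simp
  qed
  define g where "g N z = min (f z) (real N * (\<Sum>i<N. h i z))" for N z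
  have gb: "g N \<in> bcont" for N
    unfolding g_def by (intro bcont_min fb bcont_scale bcont_sum hb) auto
  have g0: "0 \<le> g N z" for N z using f0 h0 by (auto simp: g_def intro!: sum_nonneg mult_nonneg_nonneg)
  have gf: "g N z \<le> f z" for N z by (auto simp: g_def)
  define hh where "hh N i z = min (f z) (real N * h i z)" for N i z
  have hhb: "hh N i \<in> bcont" for N i unfolding hh_def by (intro bcont_min fb bcont_scale hb)
  have hhFU: "hh N i \<in> FU (U i)" for N i
    using hhb f0 h0 FU_le1[OF f] hout unfolding FU_def hh_def by (auto simp: indicator_def min_le_iff_disj intro!: mult_nonneg_nonneg)
  have gle: "I (g N) \<le> (\<Sum>i<N. I (hh N i))" for N
  proof -
    have "g N z \<le> (\<Sum>i<N. hh N i z)" for z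
      unfolding g_def hh_def sum_distrib_left using f0 h0 by (intro min_sum_le) auto
    then have "I (g N) \<le> I (\<lambda>z. \<Sum>i<N. hh N i z)" by (intro I_mono gb bcont_sum hhb) auto
    also have "\<dots> = (\<Sum>i<N. I (hh N i))" by (rule I_sum) (auto intro: hhb)
    finally show ?thesis .
  qed
  have gm: "ennreal (I (g N)) \<le> (\<Sum>n. m (U n))" for N
  proof -
    have "ennreal (I (g N)) \<le> ennreal (\<Sum>i<N. I (hh N i))" using gle by (rule ennreal_leI)
    also have "\<dots> = (\<Sum>i<N. ennreal (I (hh N i)))"
      by (rule sum_ennreal[symmetric]) (use pos hhb hhFU in \<open>auto simp: FU_def\<close>)
    also have "\<dots> \<le> (\<Sum>i<N. m (U i))" by (intro sum_mono I_le_m hhFU)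
    also have "\<dots> \<le> (\<Sum>n. m (U n))" by (rule sum_le_suminf) auto
    finally show ?thesis .
  qed
  have conv: "(\<lambda>N. I (\<lambda>z. f z - g N z)) \<longlonglongrightarrow> 0"
  proof (rule dan)
    show "\<forall>n. (\<lambda>z. f z - g n z) \<in> bcont" using fb gb by (auto intro: bcont_diff)
    show "\<forall>n z. 0 \<le> f z - g n z" using gf by auto
    show "\<forall>n z. f z - g (Suc n) z \<le> f z - g n z"
    proof (intro allI)
      fix n z
      have "real n * (\<Sum>i<n. h i z) \<le> real (Suc n) * (\<Sum>i<Suc n. h i z)"
        using h0 by (intro mult_mono sum_mono2 sum_nonneg) auto
      then show "f z - g (Suc n) z \<le> f z - g n z" by (auto simp: g_def)
    qed
    show "\<forall>z. (\<lambda>n. f z - g n z) \<longlonglongrightarrow> 0"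
    proof
      fix z
      show "(\<lambda>n. f z - g n z) \<longlonglongrightarrow> 0"
      proof (cases "f z = 0")
        case True
        then have "g n z = 0" for n using g0[of n z] gf[of n z] by auto
        then show ?thesis using True by simp
      next
        case False
        then have "f z > 0" using f0[of z] by auto
        then have "z \<in> (\<Union>n. U n)" using fle[of z] by (cases "z \<in> (\<Union>n. U n)") auto
        then obtain j where j: "z \<in> U j" by auto
        have hj: "0 < h j z" using hpos[OF j] .
        define N0 where "N0 = max (Suc j) (nat \<lceil>f z / h j z\<rceil>)"
        have "g n z = f z" if "n \<ge> N0" for n
        proof -
          have "j < n" using that by (auto simp: N0_def)
          have "f z / h j z \<le> real n" using that unfolding N0_def by linarith
          then have "f z \<le> real n * h j z" using hj by (simp add: divide_le_eq)
          also have "\<dots> \<le> real n * (\<Sum>i<n. h i z)"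
            using \<open>j < n\<close> h0 by (intro mult_left_mono member_le_sum) auto
          finally show ?thesis by (simp add: g_def)
        qed
        then show ?thesis
          by (intro tendsto_eventually eventually_sequentiallyI[of N0]) simp
      qed
    qed
  qed
  have lim: "(\<lambda>N. I (g N)) \<longlonglongrightarrow> I f"
  proof -
    have "I (g N) = I f - I (\<lambda>z. f z - g N z)" for N using I_diff[OF fb gb[of N]] by simp
    then show ?thesis using tendsto_diff[OF tendsto_const[of "I f"] conv] by simp
  qed
  show "ennreal (I f) \<le> (\<Sum>n. m (U n))"
    by (rule LIMSEQ_le_const2[OF tendsto_ennrealI[OF lim]]) (use gm in auto)
qed

lemma m_binary_subadd:
  assumes "open U" "open V" shows "m (U \<union> V) \<le> m U + m V"
proof -
  have "m (U \<union> V) = m (\<Union>n. binaryset U V n)" by (simp add: UN_binaryset_eq)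
  also have "\<dots> \<le> (\<Sum>n. m (binaryset U V n))"
    using assms by (intro m_countable_subadd) (auto simp: binaryset_def)
  also have "\<dots> = m U + m V" by (rule suminf_binaryset_eq) (rule m_empty)
  finally show ?thesis .
qed

end


context riesz begin

lemma om_countable_subadd: "om (\<Union>i. A i) \<le> (\<Sum>n. om (A n))"
proof (rule ennreal_le_epsilon)
  fix e :: real assume "0 < e" "(\<Sum>n. om (A n)) < top"
  then have *: "\<And>n. om (A n) < om (A n) + e * (1/2)^Suc n"
    by (auto simp add: less_top dest!: ennreal_suminf_lessD)
  have "\<exists>B. open B \<and> A n \<subseteq> B \<and> m B \<le> om (A n) + e * (1/2)^Suc n" for n
    using *[of n] unfolding om_def[of "A n"] INF_less_iff by (auto intro: less_imp_le)
  then obtain B where B: "\<And>n. open (B n)" "\<And>n. A n \<subseteq> B n"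
    and Ble: "\<And>n. m (B n) \<le> om (A n) + e * (1/2)^Suc n" by metis
  have "om (\<Union>i. A i) \<le> m (\<Union>i. B i)" using B by (intro om_le_m) auto
  also have "\<dots> \<le> (\<Sum>n. m (B n))" using B by (intro m_countable_subadd)
  also have "\<dots> \<le> (\<Sum>n. om (A n) + e * (1/2) ^ Suc n)"
    by (intro suminf_le Ble) auto
  also have "... = (\<Sum>n. om (A n)) + (\<Sum>n. ennreal e * ennreal ((1/2) ^ Suc n))"
    using \<open>0 < e\<close> by (subst suminf_add[symmetric])
                     (auto simp del: ennreal_suminf_cmult simp add: ennreal_mult[symmetric])
  also have "\<dots> = (\<Sum>n. om (A n)) + e"
    unfolding ennreal_suminf_cmult
    by (subst suminf_ennreal_eq[OF zero_le_power power_half_series]) auto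
  finally show "om (\<Union>i. A i) \<le> (\<Sum>n. om (A n)) + e" .
qed

lemma om_binary_subadd: "om (A \<union> B) \<le> om A + om B"
proof -
  have "om (A \<union> B) = om (\<Union>n. binaryset A B n)" by (simp add: UN_binaryset_eq)
  also have "\<dots> \<le> (\<Sum>n. om (binaryset A B n))" by (rule om_countable_subadd)
  also have "\<dots> = om A + om B" by (rule suminf_binaryset_eq) (rule om_empty)
  finally show ?thesis .
qed

lemma m_split:
  assumes U: "open U" and V: "open V"
  shows "m (V \<inter> U) + om (V - U) \<le> m V"
proof -
  have key: "ennreal (I f - d) + om (V - U) \<le> m V" if f: "f \<in> FU (V \<inter> U)" and d: "d > 0" for f d
  proof -
    from f have fb: "f \<in> bcont" and f0: "\<And>z. 0 \<le> f z" and fle: "\<And>z. f z \<le> indicator (V \<inter> U) z"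
      by (auto simp: FU_def)
    define f' where "f' z = max 0 (f z - d)" for z
    have f'b: "f' \<in> bcont" unfolding f'_def[abs_def] by (rule bcont_max[OF bcont_const bcont_diff[OF fb bcont_const]])
    have f'0: "0 \<le> f' z" for z by (auto simp: f'_def)
    have "I f \<le> I f' + d"
    proof -
      have "I f \<le> I (\<lambda>z. f' z + d * 1)" by (rule I_mono[OF fb bcont_add[OF f'b bcont_const]]) (auto simp: f'_def)
      also have "\<dots> = I f' + d" using I_add[OF f'b bcont_const[of "d*1"]] I_scale[of "\<lambda>z. 1" d] one by simp
      finally show ?thesis .
    qed
    then have 1: "ennreal (I f - d) \<le> ennreal (I f')" by (intro ennreal_leI) simp
    define C where "C = {z. d \<le> f z}"
    have "closed C" unfolding C_def using fb
      by (intro closed_Collect_le continuous_intros) (auto simp: bcont_def)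
    define W where "W = V - C"
    have "open W" unfolding W_def using V \<open>closed C\<close> by auto
    have "V - U \<subseteq> W"
    proof
      fix z assume "z \<in> V - U"
      then have "f z \<le> 0" using fle[of z] by simp
      then show "z \<in> W" using \<open>z \<in> V - U\<close> d by (auto simp: W_def C_def)
    qed
    then have 2: "om (V - U) \<le> m W" using \<open>open W\<close> by (rule om_le_m[rotated])
    have 3: "ennreal (I f') + m W \<le> m V"
    proof -
      have "ennreal (I f') + m W = (SUP g\<in>FU W. ennreal (I f') + ennreal (I g))"
        unfolding m_def[of W] by (rule ennreal_SUP_add_right) (auto simp: FU_def intro!: exI[of _ "\<lambda>z. 0"])
      also have "\<dots> \<le> m V"
      proof (rule SUP_least)
        fix g assume g: "g \<in> FU W"
        then have gb: "g \<in> bcont" and g0: "\<And>z. 0 \<le> g z" and gle: "\<And>z. g z \<le> indicator W z"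
          by (auto simp: FU_def)
        have "(\<lambda>z. f' z + g z) \<in> FU V"
        proof -
          have "f' z + g z \<le> indicator V z" for z
          proof (cases "z \<in> W")
            case True
            then have "f' z = 0" by (auto simp: W_def C_def f'_def)
            then show ?thesis using True gle[of z] by (auto simp: W_def)
          next
            case False
            then have "g z = 0" using gle[of z] g0[of z] by auto
            moreover have "f' z \<le> indicator V z" using fle[of z] f0[of z] d
              by (cases "z \<in> U"; cases "z \<in> V") (auto simp: f'_def)
            ultimately show ?thesis by simp
          qed
          then show ?thesis using f'b gb f'0 g0 by (auto simp: FU_def intro!: bcont_add add_nonneg_nonneg)
        qed
        then have "ennreal (I (\<lambda>z. f' z + g z)) \<le> m V" by (rule I_le_m)
        moreover have "ennreal (I (\<lambda>z. f' z + g z)) = ennreal (I f') + ennreal (I g)"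
          using I_add[OF f'b gb] pos[OF f'b] pos[OF gb] f'0 g0 by (simp add: ennreal_plus)
        ultimately show "ennreal (I f') + ennreal (I g) \<le> m V" by simp
      qed
      finally show ?thesis .
    qed
    show ?thesis using 1 2 3 by (meson add_mono order.trans order_refl)
  qed
  have key2: "ennreal (I f) + om (V - U) \<le> m V" if f: "f \<in> FU (V \<inter> U)" for f
  proof (rule ennreal_le_epsilon)
    fix e :: real assume "0 < e"
    have "ennreal (I f) \<le> ennreal (I f - e) + ennreal e"
    proof (cases "I f - e \<ge> 0")
      case True then show ?thesis using \<open>0 < e\<close> by (auto simp: ennreal_plus[symmetric] intro!: ennreal_leI)
    next
      case False
      then have "ennreal (I f - e) = 0" by (intro ennreal_neg) simp
      then show ?thesis using False by (auto intro!: ennreal_leI)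
    qed
    then have "ennreal (I f) + om (V - U) \<le> ennreal (I f - e) + om (V - U) + ennreal e"
      by (metis add.commute add.left_commute add_right_mono)
    also have "\<dots> \<le> m V + ennreal e" using key[OF f \<open>0 < e\<close>] by (rule add_right_mono)
    finally show "ennreal (I f) + om (V - U) \<le> m V + ennreal e" .
  qed
  have "m (V \<inter> U) + om (V - U) = (SUP f\<in>FU (V \<inter> U). ennreal (I f) + om (V - U))"
    unfolding m_def[of "V \<inter> U"] by (rule ennreal_SUP_add_left[symmetric]) (auto simp: FU_def intro!: exI[of _ "\<lambda>z. 0"])
  also have "\<dots> \<le> m V" by (rule SUP_least) (rule key2)
  finally show ?thesis .
qed

lemma open_lambda: assumes "open U" shows "U \<in> lambda_system UNIV (Pow UNIV) om"
  unfolding lambda_system_def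
proof (safe)
  fix x :: "'z set"
  show "om (U \<inter> x) + om ((UNIV - U) \<inter> x) = om x"
  proof (rule antisym)
    show "om (U \<inter> x) + om ((UNIV - U) \<inter> x) \<le> om x"
      unfolding om_def[of x]
    proof (rule INF_greatest)
      fix V assume V: "V \<in> {V. open V \<and> x \<subseteq> V}"
      have "om (U \<inter> x) \<le> m (V \<inter> U)" using V assms by (intro om_le_m) auto
      moreover have "om ((UNIV - U) \<inter> x) \<le> om (V - U)" using V by (intro om_mono) auto
      ultimately have "om (U \<inter> x) + om ((UNIV - U) \<inter> x) \<le> m (V \<inter> U) + om (V - U)" by (rule add_mono)
      also have "\<dots> \<le> m V" using V assms by (intro m_split) auto
      finally show "om (U \<inter> x) + om ((UNIV - U) \<inter> x) \<le> m V" .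
    qed
    have "om x \<le> om ((U \<inter> x) \<union> ((UNIV - U) \<inter> x))" by (rule om_mono) auto
    also have "\<dots> \<le> om (U \<inter> x) + om ((UNIV - U) \<inter> x)" by (rule om_binary_subadd)
    finally show "om x \<le> om (U \<inter> x) + om ((UNIV - U) \<inter> x)" .
  qed
qed simp

lemma om_outer: "outer_measure_space (Pow UNIV) om"
  unfolding outer_measure_space_def positive_def increasing_def countably_subadditive_def
  using om_empty om_mono om_countable_subadd by auto

definition pi :: "'z measure" where "pi = measure_of UNIV (sets borel) om"

lemma pi_facts: "sets pi = sets borel" "\<And>A. A \<in> sets borel \<Longrightarrow> emeasure pi A = om A"
proof -
  have ms: "measure_space UNIV (lambda_system UNIV (Pow UNIV) om) om"
    by (rule sigma_algebra.caratheodory_lemma[OF sigma_algebra_Pow om_outer])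
  then have sa: "sigma_algebra UNIV (lambda_system UNIV (Pow UNIV) om)" by (simp add: measure_space_def)
  have sub: "sets borel \<subseteq> lambda_system UNIV (Pow UNIV) om"
    unfolding sets_borel by (rule sigma_algebra.sigma_sets_subset[OF sa]) (auto intro: open_lambda[unfolded Pow_UNIV])
  have ms2: "measure_space UNIV (sets borel) om"
    by (rule measure_down[OF ms _ sub]) (metis sets.sigma_algebra_axioms space_borel)
  show "sets pi = sets borel" unfolding pi_def by (simp add: sets.sigma_sets_eq[of borel, simplified])
  fix A :: "'z set" assume "A \<in> sets borel"
  then show "emeasure pi A = om A" unfolding pi_def
    using ms2 by (intro emeasure_measure_of_sigma) (auto simp: measure_space_def)
qed

lemma space_pi: "space pi = UNIV"
  using sets_eq_imp_space_eq[OF pi_facts(1)] by simp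

lemma prob_pi: "prob_space pi"
  by (rule prob_spaceI) (simp add: space_pi pi_facts om_open m_UNIV)

lemma emeasure_pi_open: "open U \<Longrightarrow> emeasure pi U = m U"
  by (simp add: pi_facts om_open)

end


context riesz begin

lemma fin_pi: "finite_measure pi" using prob_pi by (rule prob_space.finite_measure)

lemma pi_integrable: "f \<in> bcont \<Longrightarrow> integrable pi f"
  by (rule bcont_integrable[OF _ fin_pi pi_facts(1)])

lemma meas_open: "open U \<Longrightarrow> m U = ennreal (measure pi U)"
  using emeasure_pi_open[of U] finite_measure.emeasure_eq_measure[OF fin_pi] by metis

lemma int_01:
  assumes gb: "g \<in> bcont" and g0: "\<And>z. 0 \<le> g z" and g1: "\<And>z. g z \<le> 1"
  shows "I g = (\<integral>z. g z \<partial>pi)"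
proof -
  have bound: "\<bar>I g - (\<integral>z. g z \<partial>pi)\<bar> \<le> 1 / real N" if N: "N \<ge> 1" for N :: nat
  proof -
    define gi where "gi i z = min 1 (max 0 (real N * g z - real i))" for i :: nat and z
    define U where "U i = {z. real i < real N * g z}" for i :: nat
    have gib: "gi i \<in> bcont" for i
      unfolding gi_def[abs_def]
      by (rule bcont_min[OF bcont_const bcont_max[OF bcont_const bcont_diff[OF bcont_scale[OF gb] bcont_const]]])
    have gcont: "continuous_on UNIV g" using gb by (auto simp: bcont_def)
    have Uo: "open (U i)" for i unfolding U_def by (intro open_Collect_less continuous_intros gcont)
    have Ub: "U i \<in> sets pi" for i using Uo[of i] by (simp add: pi_facts)
    have sumgi: "(\<Sum>i<N. gi i z) = real N * g z" for z
    proof -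
      have "(\<Sum>i<N. gi i z) = min (real N) (max 0 (real N * g z))" unfolding gi_def by (rule clamp_sum)
      also have "\<dots> = real N * g z" using g0[of z] g1[of z] by (simp add: mult_left_le)
      finally show ?thesis .
    qed
    have ind_le: "indicator (U (Suc i)) z \<le> gi i z" for i z
      by (auto simp: indicator_def U_def gi_def)
    have le_ind: "gi i z \<le> indicator (U i) z" for i z
      by (auto simp: indicator_def U_def gi_def)
    have gi0: "0 \<le> gi i z" for i z by (auto simp: gi_def)
    have giFU: "gi i \<in> FU (U i)" for i using gib gi0 le_ind by (auto simp: FU_def)
    have up: "I (gi i) \<le> measure pi (U i)" for i
      using I_le_m[OF giFU[of i]] meas_open[OF Uo[of i]] by (simp add: ennreal_le_iff)
    have low: "measure pi (U (Suc i)) \<le> I (gi i)" for i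
    proof -
      have "m (U (Suc i)) \<le> ennreal (I (gi i))"
        unfolding m_def
      proof (rule SUP_least)
        fix f assume "f \<in> FU (U (Suc i))"
        then have "f \<in> bcont" "\<And>z. f z \<le> gi i z" using ind_le by (auto simp: FU_def intro: order_trans)
        then show "ennreal (I f) \<le> ennreal (I (gi i))" by (intro ennreal_leI I_mono gib)
      qed
      then show ?thesis using meas_open[OF Uo[of "Suc i"]] pos[OF gib] gi0
        by (simp add: ennreal_le_iff)
    qed
    have int_ind: "(\<integral>z. indicator (U i) z \<partial>pi) = measure pi (U i)" for i
      by (simp add: integral_indicator space_pi)
    have ind_int: "integrable pi (indicator (U i) :: 'z \<Rightarrow> real)" for i
      using Ub[of i] finite_measure.emeasure_finite[OF fin_pi] by (auto simp: integrable_indicator_iff space_pi less_top)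
    have iup: "(\<integral>z. gi i z \<partial>pi) \<le> measure pi (U i)" for i
      using integral_mono[OF pi_integrable[OF gib] ind_int, of i i] le_ind int_ind by simp
    have ilow: "measure pi (U (Suc i)) \<le> (\<integral>z. gi i z \<partial>pi)" for i
      using integral_mono[OF ind_int pi_integrable[OF gib], of "Suc i" i] ind_le int_ind by simp
    have each: "\<bar>I (gi i) - (\<integral>z. gi i z \<partial>pi)\<bar> \<le> measure pi (U i) - measure pi (U (Suc i))" for i
      using up[of i] low[of i] iup[of i] ilow[of i] by linarith
    have "real N * I g = I (\<lambda>z. \<Sum>i<N. gi i z)" by (simp add: sumgi I_scale gb)
    also have "\<dots> = (\<Sum>i<N. I (gi i))" by (rule I_sum) (auto intro: gib)
    finally have e1: "real N * I g = (\<Sum>i<N. I (gi i))" .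
    have "real N * (\<integral>z. g z \<partial>pi) = (\<integral>z. (\<Sum>i<N. gi i z) \<partial>pi)" by (simp add: sumgi)
    also have "\<dots> = (\<Sum>i<N. (\<integral>z. gi i z \<partial>pi))" using Bochner_Integration.integral_sum[of "{..<N}" pi gi] pi_integrable gib by auto
    finally have e2: "real N * (\<integral>z. g z \<partial>pi) = (\<Sum>i<N. (\<integral>z. gi i z \<partial>pi))" .
    have "\<bar>real N * I g - real N * (\<integral>z. g z \<partial>pi)\<bar> = \<bar>\<Sum>i<N. I (gi i) - (\<integral>z. gi i z \<partial>pi)\<bar>"
      by (simp add: e1 e2 sum_subtractf)
    also have "\<dots> \<le> (\<Sum>i<N. \<bar>I (gi i) - (\<integral>z. gi i z \<partial>pi)\<bar>)" by (rule sum_abs)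
    also have "\<dots> \<le> (\<Sum>i<N. measure pi (U i) - measure pi (U (Suc i)))" by (intro sum_mono each)
    also have "\<dots> = measure pi (U 0) - measure pi (U N)" by (rule sum_lessThan_telescope')
    also have "\<dots> \<le> 1" using prob_space.prob_le_1[OF prob_pi] measure_nonneg[of pi "U N"] by smt
    finally have "real N * \<bar>I g - (\<integral>z. g z \<partial>pi)\<bar> \<le> 1"
      by (simp add: right_diff_distrib[symmetric] abs_mult)
    then show ?thesis using N by (simp add: field_simps)
  qed
  show ?thesis
  proof (rule ccontr)
    assume "I g \<noteq> (\<integral>z. g z \<partial>pi)"
    then have d: "\<bar>I g - (\<integral>z. g z \<partial>pi)\<bar> > 0" by simp
    obtain N :: nat where N: "N > 1 / \<bar>I g - (\<integral>z. g z \<partial>pi)\<bar>" using reals_Archimedean2 by blast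
    then have "N \<ge> 1" using d by (cases N) (auto simp: field_simps)
    have "\<bar>I g - (\<integral>z. g z \<partial>pi)\<bar> * N > 1" using N d by (simp add: field_simps)
    moreover have "\<bar>I g - (\<integral>z. g z \<partial>pi)\<bar> * N \<le> 1" using bound[OF \<open>N \<ge> 1\<close>] \<open>N \<ge> 1\<close> by (simp add: field_simps)
    ultimately show False by simp
  qed
qed

lemma int_bcont: assumes fb: "f \<in> bcont" shows "I f = (\<integral>z. f z \<partial>pi)"
proof -
  obtain B0 where B0: "\<And>z. \<bar>f z\<bar> \<le> B0" using fb by (auto simp: bcont_def)
  define B where "B = \<bar>B0\<bar> + 1"
  have Bp: "B > 0" by (simp add: B_def add_nonneg_pos)
  have B: "\<bar>f z\<bar> \<le> B" for z using B0[of z] abs_ge_self[of B0] by (simp add: B_def)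
  define g where "g z = (f z + B) / (2 * B)" for z
  have gb: "g \<in> bcont" unfolding g_def[abs_def] using bcont_lin[OF fb bcont_const, of "1/(2*B)" "B/(2*B)" 1]
    by (simp add: add_divide_distrib)
  have "g z \<ge> 0" "g z \<le> 1" for z using B[of z] Bp by (auto simp: g_def field_simps abs_le_iff)
  then have eq: "I g = (\<integral>z. g z \<partial>pi)" using int_01[OF gb] by blast
  have fg: "f = (\<lambda>z. (2 * B) * g z + (- B) * 1)" using Bp by (auto simp: g_def field_simps)
  have "I f = (2 * B) * I g + (- B) * I (\<lambda>z. 1)" by (subst fg) (rule lin[OF gb bcont_const])
  also have "\<dots> = (2 * B) * (\<integral>z. g z \<partial>pi) - B" using one eq by simp
  also have "\<dots> = (\<integral>z. (2 * B) * g z + (- B) * 1 \<partial>pi)"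
  proof -
    have "(\<integral>z. (2 * B) * g z + (- B) * 1 \<partial>pi) = (\<integral>z. (2 * B) * g z \<partial>pi) + (\<integral>z. (- B) \<partial>pi)"
      using pi_integrable[OF gb] finite_measure.integrable_const[OF fin_pi]
      by (subst Bochner_Integration.integral_add[symmetric]) auto
    also have "\<dots> = (2 * B) * (\<integral>z. g z \<partial>pi) - B" using prob_space.prob_space[OF prob_pi] by (simp add: space_pi)
    finally show ?thesis by simp
  qed
  also have "\<dots> = (\<integral>z. f z \<partial>pi)" using fg by metis
  finally show ?thesis .
qed

lemma riesz_main: "\<exists>\<pi>. sets \<pi> = sets borel \<and> prob_space \<pi> \<and> (\<forall>f\<in>bcont. I f = (\<integral>z. f z \<partial>\<pi>))"
  using pi_facts(1) prob_pi int_bcont by blast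

end


lemma dini:
  fixes f :: "nat \<Rightarrow> 'z::metric_space \<Rightarrow> real"
  assumes C: "compact C" and fc: "\<And>n. continuous_on UNIV (f n)" and dec: "\<And>n z. f (Suc n) z \<le> f n z"
    and lim: "\<And>z. (\<lambda>n. f n z) \<longlonglongrightarrow> 0" and d: "d > 0"
  shows "\<exists>N. \<forall>n\<ge>N. \<forall>z\<in>C. f n z < d"
proof -
  have "\<exists>n. f n z < d" for z
  proof -
    have "eventually (\<lambda>n. f n z < d) sequentially" using order_tendstoD(2)[OF lim[of z] d] .
    then show ?thesis by (auto simp: eventually_sequentially)
  qed
  then obtain nz where nz: "\<And>z. f (nz z) z < d" by metis
  have op: "open {y. f (nz z) y < d}" for z by (intro open_Collect_less fc continuous_intros)
  obtain T where T: "T \<subseteq> C" "finite T" "C \<subseteq> (\<Union>t\<in>T. {y. f (nz t) y < d})"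
    by (rule compactE_image[OF C, of C "\<lambda>z. {y. f (nz z) y < d}"]) (use op nz in auto)
  define N where "N = (\<Sum>t\<in>T. nz t)"
  have "f n z < d" if "n \<ge> N" "z \<in> C" for n z
  proof -
    obtain t where t: "t \<in> T" "f (nz t) z < d" using T(3) \<open>z \<in> C\<close> by auto
    have "nz t \<le> N" unfolding N_def using t(1) T(2) by (intro member_le_sum) auto
    then have "nz t \<le> n" using that by simp
    have "decseq (\<lambda>n. f n z)" using dec by (simp add: decseq_Suc_iff)
    then have "f n z \<le> f (nz t) z" using \<open>nz t \<le> n\<close> by (rule decseqD)
    then show ?thesis using t by simp
  qed
  then show ?thesis by blast
qed

lemma cutoff:
  fixes K :: "'z::metric_space set"
  assumes lc: "loc_compact_type TYPE('z)" and K: "compact K"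
  shows "\<exists>\<phi> K'. compact K' \<and> continuous_on UNIV \<phi> \<and> (\<forall>z. 0 \<le> \<phi> z \<and> \<phi> z \<le> 1) \<and>
           (\<forall>z\<in>K. \<phi> z = 1) \<and> (\<forall>z. z \<notin> K' \<longrightarrow> \<phi> z = (0::real))"
proof (cases "K = {}")
  case True
  then show ?thesis by (intro exI[of _ "\<lambda>z. 0"] exI[of _ "{}"]) auto
next
  case False
  have ex: "\<exists>U C. open U \<and> compact C \<and> x \<in> U \<and> U \<subseteq> C" for x :: 'z
    using lc unfolding loc_compact_type_def by blast
  define Uf where "Uf x = (SOME U. \<exists>C. open U \<and> compact C \<and> x \<in> U \<and> U \<subseteq> C)" for x :: 'z
  have ex2: "\<exists>C. open (Uf x) \<and> compact C \<and> x \<in> Uf x \<and> Uf x \<subseteq> C" for x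
    unfolding Uf_def by (rule someI_ex) (rule ex)
  define Cf where "Cf x = (SOME C. open (Uf x) \<and> compact C \<and> x \<in> Uf x \<and> Uf x \<subseteq> C)" for x :: 'z
  have UC': "\<forall>x. open (Uf x) \<and> compact (Cf x) \<and> x \<in> Uf x \<and> Uf x \<subseteq> Cf x"
    unfolding Cf_def using someI_ex[OF ex2] by blast
  then have UC: "\<And>x. open (Uf x)" "\<And>x. compact (Cf x)" "\<And>x. x \<in> Uf x" "\<And>x. Uf x \<subseteq> Cf x" by auto
  obtain T where T: "T \<subseteq> K" "finite T" "K \<subseteq> (\<Union>t\<in>T. Uf t)"
    by (rule compactE_image[OF K, of K Uf]) (use UC in auto)
  define W where "W = (\<Union>t\<in>T. Uf t)"
  define K' where "K' = (\<Union>t\<in>T. Cf t)"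
  have KW: "K \<subseteq> W" using T(3) by (simp add: W_def)
  have "open W" using UC by (auto simp: W_def)
  have "compact K'" unfolding K'_def using T(2) UC(2) by (intro compact_UN) auto
  have WK': "W \<subseteq> K'" using UC(4) by (auto simp: W_def K'_def)
  obtain e where e: "e > 0" "(\<Union>x\<in>K. ball x e) \<subseteq> W"
    by (rule compact_subset_open_imp_ball_epsilon_subset[OF K \<open>open W\<close> KW])
  define \<phi> where "\<phi> z = max 0 (1 - infdist z K / e)" for z
  have cont: "continuous_on UNIV \<phi>" unfolding \<phi>_def[abs_def] by (intro continuous_intros) (use e in auto)
  have b: "0 \<le> \<phi> z \<and> \<phi> z \<le> 1" for z
  proof -
    have "0 \<le> infdist z K / e" using infdist_nonneg[of z K] e by simp
    then show ?thesis unfolding \<phi>_def by linarith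
  qed
  have one: "\<phi> z = 1" if "z \<in> K" for z using that by (simp add: \<phi>_def)
  have zero: "\<phi> z = 0" if "z \<notin> K'" for z
  proof (rule ccontr)
    assume "\<phi> z \<noteq> 0"
    then have "1 - infdist z K / e > 0" unfolding \<phi>_def by (metis max.absorb1 not_less)
    then have "infdist z K < e" using e by (simp add: field_simps)
    have bdd: "bdd_below ((\<lambda>a. dist z a) ` K)" by (rule bdd_belowI[where m=0]) auto
    obtain k where k: "k \<in> K" "dist z k < e"
      using \<open>infdist z K < e\<close> unfolding infdist_notempty[OF \<open>K \<noteq> {}\<close>] cINF_less_iff[OF \<open>K \<noteq> {}\<close> bdd] by blast
    then have "z \<in> ball k e" by (simp add: dist_commute)
    then have "z \<in> W" using e(2) k(1) by blast
    then show False using WK' that by blast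
  qed
  show ?thesis
    by (rule exI[of _ \<phi>], rule exI[of _ K']) (use \<open>compact K'\<close> cont b one zero in simp)
qed

lemma tight:
  fixes M :: "'z::metric_space measure"
  assumes sc: "sigma_compact_type TYPE('z)" and fm: "finite_measure M" and sM: "sets M = sets borel" and e: "e > 0"
  shows "\<exists>K. compact K \<and> measure M (UNIV - K) < e"
proof -
  obtain Kn :: "nat \<Rightarrow> 'z set" where Kn: "\<And>n. compact (Kn n)" "(\<Union>n. Kn n) = UNIV"
    using sc unfolding sigma_compact_type_def by blast
  define A where "A N = (\<Union>n\<le>N. Kn n)" for N
  have Ac: "compact (A N)" for N unfolding A_def using Kn(1) by (intro compact_UN) auto
  have inc: "incseq A" unfolding A_def incseq_def by (auto, meson atMost_iff order_trans)
  have Asets: "range A \<subseteq> sets M" using Ac by (auto simp: sM intro: borel_closed compact_imp_closed)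
  have AU: "(\<Union>i. A i) = UNIV" using Kn(2) by (auto simp: A_def)
  have spM: "space M = UNIV" using sets_eq_imp_space_eq[OF sM] by simp
  have lim: "(\<lambda>i. measure M (A i)) \<longlonglongrightarrow> measure M UNIV"
    using finite_measure.finite_Lim_measure_incseq[OF fm Asets inc] AU by simp
  have eqd: "measure M (UNIV - A i) = measure M UNIV - measure M (A i)" for i
    using finite_measure.finite_measure_Diff[OF fm, of UNIV "A i"] Asets spM by (auto simp: sets.top[of M, simplified spM])
  have "(\<lambda>i. measure M (UNIV - A i)) \<longlonglongrightarrow> 0"
    unfolding eqd using tendsto_diff[OF tendsto_const[of "measure M UNIV"] lim] by simp
  from order_tendstoD(2)[OF this e] obtain N where "measure M (UNIV - A N) < e"
    by (auto simp: eventually_sequentially)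
  then show ?thesis using Ac by blast
qed

lemma open_approx:
  fixes M :: "'z::metric_space measure"
  assumes fm: "finite_measure M" and sM: "sets M = sets borel" and U: "open U" "U \<noteq> UNIV"
  defines "g \<equiv> \<lambda>n z. min 1 (real n * infdist z (- U))"
  shows "(\<lambda>n. \<integral>z. g n z \<partial>M) \<longlonglongrightarrow> measure M U" and "\<And>n. g n \<in> bcont" and "\<And>n z. 0 \<le> g n z \<and> g n z \<le> 1"
proof -
  show gb: "g n \<in> bcont" for n
  proof (rule bcontI[where B=1])
    show "continuous_on UNIV (g n)" unfolding g_def by (intro continuous_intros)
    fix z show "\<bar>g n z\<bar> \<le> 1" using infdist_nonneg[of z "-U"] by (auto simp: g_def)
  qed
  show g01: "0 \<le> g n z \<and> g n z \<le> 1" for n z using infdist_nonneg[of z "-U"] by (auto simp: g_def)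
  interpret finite_measure M by fact
  have spM: "space M = UNIV" using sets_eq_imp_space_eq[OF sM] by simp
  have "(\<lambda>n. \<integral>z. g n z \<partial>M) \<longlonglongrightarrow> (\<integral>z. indicator U z \<partial>M)"
  proof (rule integral_dominated_convergence[where w="\<lambda>z. 1"])
    show "indicat_real U \<in> borel_measurable M" using U by (auto simp: measurable_cong_sets[OF sM refl])
    show "g n \<in> borel_measurable M" for n using bcont_measurable[OF gb] by (simp add: measurable_cong_sets[OF sM refl])
    show "integrable M (\<lambda>z. 1)" by simp
    show "AE x in M. norm (g n x) \<le> 1" for n using g01 by auto
    show "AE x in M. (\<lambda>n. g n x) \<longlonglongrightarrow> indicator U x"
    proof (rule AE_I2)
      fix z
      show "(\<lambda>n. g n z) \<longlonglongrightarrow> indicator U z"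
      proof (cases "z \<in> U")
        case False
        then show ?thesis by (simp add: g_def)
      next
        case True
        have dpos: "0 < infdist z (- U)" using U True by (intro infdist_pos_not_in_closed) auto
        have "g n z = 1" if "n \<ge> nat \<lceil>1 / infdist z (- U)\<rceil>" for n
        proof -
          have "1 / infdist z (- U) \<le> real n" using that by linarith
          then have "1 \<le> real n * infdist z (- U)" using dpos by (simp add: divide_le_eq mult.commute)
          then show ?thesis by (simp add: g_def)
        qed
        then show ?thesis using True
          by (intro tendsto_eventually eventually_sequentiallyI[of "nat \<lceil>1 / infdist z (- U)\<rceil>"]) simp
      qed
    qed
  qed
  then show "(\<lambda>n. \<integral>z. g n z \<partial>M) \<longlonglongrightarrow> measure M U" by (simp add: spM)
qed

lemma measure_eq_bcont:
  fixes M N :: "'z::metric_space measure"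
  assumes fM: "finite_measure M" and fN: "finite_measure N" and sM: "sets M = sets borel" and sN: "sets N = sets borel"
    and eq: "\<And>g. g \<in> bcont \<Longrightarrow> (\<forall>z. 0 \<le> g z \<and> g z \<le> 1) \<Longrightarrow> (\<integral>z. g z \<partial>M) = (\<integral>z. g z \<partial>N)"
  shows "M = N"
proof -
  have spM: "space M = UNIV" using sets_eq_imp_space_eq[OF sM] by simp
  have spN: "space N = UNIV" using sets_eq_imp_space_eq[OF sN] by simp
  have meq: "measure M U = measure N U" if U: "open U" for U
  proof (cases "U = UNIV")
    case True
    have "(\<integral>z. 1 \<partial>M) = (\<integral>z. (1::real) \<partial>N)" by (rule eq) auto
    then show ?thesis using True spM spN by simp
  next
    case False
    note aM = open_approx[OF fM sM U False] and aN = open_approx[OF fN sN U False]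
    have "(\<lambda>n. \<integral>z. min 1 (real n * infdist z (- U)) \<partial>M) = (\<lambda>n. \<integral>z. min 1 (real n * infdist z (- U)) \<partial>N)"
      using eq aM(2,3) by blast
    then show ?thesis using LIMSEQ_unique[OF aM(1)] aN(1) by metis
  qed
  show ?thesis
  proof (rule measure_eqI_generator_eq[where E="{S. open S}" and \<Omega>=UNIV and A="\<lambda>_. UNIV"])
    show "Int_stable {S :: 'z set. open S}" by (auto simp: Int_stable_def)
    show "{S :: 'z set. open S} \<subseteq> Pow UNIV" by auto
    show "emeasure M X = emeasure N X" if "X \<in> {S. open S}" for X
      using meq[of X] that finite_measure.emeasure_eq_measure[OF fM] finite_measure.emeasure_eq_measure[OF fN] by simp
    show "sets M = sigma_sets UNIV {S. open S}" using sM by (simp add: sets_borel)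
    show "sets N = sigma_sets UNIV {S. open S}" using sN by (simp add: sets_borel)
    show "range (\<lambda>_. UNIV) \<subseteq> {S :: 'z set. open S}" by auto
    show "(\<Union>i. (UNIV :: 'z set)) = UNIV" by simp
    show "emeasure M UNIV \<noteq> \<infinity>" for i :: nat using finite_measure.emeasure_finite[OF fM] by simp
  qed
qed



lemma nX_nonneg: "0 \<le> nX x0 x" by (simp add: nX_def)
lemma nXY_nonneg: "0 \<le> nXY x0 y0 z" by (simp add: nXY_def)
lemma nX_cont: "continuous_on UNIV (nX x0)" unfolding nX_def[abs_def] by (intro continuous_intros)
lemma nXY_cont: "continuous_on UNIV (nXY x0 y0)" unfolding nXY_def[abs_def] by (intro continuous_intros)

lemma bcont_Cbk: assumes w: "\<And>z. 0 \<le> w z" and f: "f \<in> bcont" shows "f \<in> Cbk w k"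
proof -
  obtain B where B: "continuous_on UNIV f" "\<And>z. \<bar>f z\<bar> \<le> B" using f unfolding bcont_def by blast
  have "\<bar>f z\<bar> \<le> B * (1 + w z ^ k)" for z
  proof -
    have "0 \<le> B" using B(2)[of z] by linarith
    then have "B \<le> B * (1 + w z ^ k)" using w[of z] by (simp add: mult_le_cancel_left1)
    then show ?thesis using B(2)[of z] by linarith
  qed
  then show ?thesis using B(1) unfolding Cbk_def by blast
qed

lemma Cbk_lin: assumes "f \<in> Cbk w k" "g \<in> Cbk w k" and w: "\<And>z. 0 \<le> w z"
  shows "(\<lambda>z. a * f z + b * g z) \<in> Cbk w k"
proof -
  obtain C where C: "continuous_on UNIV f" "\<And>z. \<bar>f z\<bar> \<le> C * (1 + w z ^ k)" using assms(1) unfolding Cbk_def by blast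
  obtain D where D: "continuous_on UNIV g" "\<And>z. \<bar>g z\<bar> \<le> D * (1 + w z ^ k)" using assms(2) unfolding Cbk_def by blast
  have "\<bar>a * f z + b * g z\<bar> \<le> (\<bar>a\<bar> * C + \<bar>b\<bar> * D) * (1 + w z ^ k)" for z
  proof -
    have "\<bar>a * f z + b * g z\<bar> \<le> \<bar>a\<bar> * \<bar>f z\<bar> + \<bar>b\<bar> * \<bar>g z\<bar>" by (simp add: abs_mult abs_triangle_ineq[THEN order_trans])
    also have "\<dots> \<le> \<bar>a\<bar> * (C * (1 + w z ^ k)) + \<bar>b\<bar> * (D * (1 + w z ^ k))"
      using C(2)[of z] D(2)[of z] by (intro add_mono mult_left_mono) auto
    finally show ?thesis by (simp add: algebra_simps)
  qed
  moreover have "continuous_on UNIV (\<lambda>z. a * f z + b * g z)" using C(1) D(1) by (intro continuous_intros)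
  ultimately show ?thesis unfolding Cbk_def by blast
qed

lemma Cbk_prod:
  fixes x0 :: "'a::metric_space" and y0 :: "'b::metric_space"
  assumes u: "u \<in> Cbk (nX x0) k" and v: "v \<in> Cbk (nX y0) k"
  shows "(\<lambda>z. u (fst z) + v (snd z)) \<in> Cbk (nXY x0 y0) k"
proof -
  obtain C where C: "continuous_on UNIV u" "\<And>x. \<bar>u x\<bar> \<le> C * (1 + nX x0 x ^ k)" using u unfolding Cbk_def by blast
  obtain D where D: "continuous_on UNIV v" "\<And>y. \<bar>v y\<bar> \<le> D * (1 + nX y0 y ^ k)" using v unfolding Cbk_def by blast
  have C0: "0 \<le> C"
  proof -
    have "0 \<le> C * (1 + nX x0 x0 ^ k)" using C(2)[of x0] abs_ge_zero order_trans by blast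
    moreover have "1 + nX x0 x0 ^ k > 0" using nX_nonneg[of x0 x0] by (simp add: add_pos_nonneg)
    ultimately show ?thesis by (simp add: zero_le_mult_iff)
  qed
  have D0: "0 \<le> D"
  proof -
    have "0 \<le> D * (1 + nX y0 y0 ^ k)" using D(2)[of y0] abs_ge_zero order_trans by blast
    moreover have "1 + nX y0 y0 ^ k > 0" using nX_nonneg[of y0 y0] by (simp add: add_pos_nonneg)
    ultimately show ?thesis by (simp add: zero_le_mult_iff)
  qed
  have "\<bar>u (fst z) + v (snd z)\<bar> \<le> (C + D) * (1 + nXY x0 y0 z ^ k)" for z
  proof -
    have a: "nX x0 (fst z) ^ k \<le> nXY x0 y0 z ^ k" by (intro power_mono) (auto simp: nX_def nXY_def)
    have b: "nX y0 (snd z) ^ k \<le> nXY x0 y0 z ^ k" by (intro power_mono) (auto simp: nX_def nXY_def)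
    have "\<bar>u (fst z) + v (snd z)\<bar> \<le> \<bar>u (fst z)\<bar> + \<bar>v (snd z)\<bar>" by (rule abs_triangle_ineq)
    also have "\<dots> \<le> C * (1 + nX x0 (fst z) ^ k) + D * (1 + nX y0 (snd z) ^ k)" using C(2) D(2) by (rule add_mono)
    also have "\<dots> \<le> C * (1 + nXY x0 y0 z ^ k) + D * (1 + nXY x0 y0 z ^ k)"
      using a b C0 D0 by (intro add_mono mult_left_mono) auto
    finally show ?thesis by (simp add: algebra_simps)
  qed
  moreover have "continuous_on UNIV (\<lambda>z. u (fst z) + v (snd z))"
    using C(1) D(1) by (intro continuous_intros continuous_on_compose2[OF C(1)] continuous_on_compose2[OF D(1)]) auto
  ultimately show ?thesis unfolding Cbk_def by blast
qed

lemma pow_sum_le: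
  fixes a b :: real assumes "0 \<le> a" "0 \<le> b"
  shows "(a + b) ^ k \<le> 2 ^ k * (a ^ k + b ^ k)"
proof -
  have "(a + b) ^ k \<le> (2 * max a b) ^ k" using assms by (intro power_mono) auto
  also have "\<dots> = 2 ^ k * max a b ^ k" by (simp add: power_mult_distrib)
  also have "max a b ^ k \<le> a ^ k + b ^ k" using assms by (auto simp: max_def)
  then have "2 ^ k * max a b ^ k \<le> 2 ^ k * (a ^ k + b ^ k)" by simp
  finally show ?thesis .
qed

lemma SUP_min_ennreal: assumes "0 \<le> t" shows "(SUP n. ennreal (min (real n) t)) = ennreal t"
proof (rule antisym)
  show "(SUP n. ennreal (min (real n) t)) \<le> ennreal t" by (rule SUP_least) (auto intro: ennreal_leI)
  obtain n :: nat where "t \<le> real n" using real_arch_simple by blast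
  then have "ennreal t = ennreal (min (real n) t)" by simp
  then show "ennreal t \<le> (SUP n. ennreal (min (real n) t))" by (metis SUP_upper UNIV_I)
qed

lemma nn_trunc:
  assumes f: "f \<in> borel_measurable M" and f0: "\<And>x. 0 \<le> f x"
    and bd: "\<And>n. (\<integral>\<^sup>+ x. ennreal (min (real n) (f x)) \<partial>M) \<le> ennreal C"
  shows "(\<integral>\<^sup>+ x. ennreal (f x) \<partial>M) \<le> ennreal C"
proof -
  have "(\<integral>\<^sup>+ x. ennreal (f x) \<partial>M) = (\<integral>\<^sup>+ x. (SUP n. ennreal (min (real n) (f x))) \<partial>M)"
    using SUP_min_ennreal[OF f0] by simp
  also have "\<dots> = (SUP n. \<integral>\<^sup>+ x. ennreal (min (real n) (f x)) \<partial>M)"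
  proof (rule nn_integral_monotone_convergence_SUP)
    show "incseq (\<lambda>n x. ennreal (min (real n) (f x)))"
      by (auto simp: incseq_def le_fun_def intro!: ennreal_leI)
    show "(\<lambda>x. ennreal (min (real n) (f x))) \<in> borel_measurable M" for n using f by measurable
  qed
  also have "\<dots> \<le> ennreal C" by (rule SUP_least) (rule bd)
  finally show ?thesis .
qed

lemma cut_int:
  fixes M :: "'c::metric_space measure"
  assumes pM: "prob_space M" and sM: "sets M = sets borel" and K: "compact K"
    and pc: "continuous_on UNIV p" and p01: "\<forall>z. 0 \<le> p z \<and> p z \<le> 1" and p1: "\<forall>z\<in>K. p z = 1" and B: "0 \<le> B"
  shows "(\<integral>x. c + B * (1 - p x) \<partial>M) \<le> c + B * measure M (UNIV - K)"
proof -
  interpret prob_space M by fact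
  have spM: "space M = UNIV" using sets_eq_imp_space_eq[OF sM] by simp
  have pU: "measure M UNIV = 1" using prob_space spM by simp
  have Kb: "UNIV - K \<in> sets M" using K by (auto simp: sM intro: borel_closed compact_imp_closed)
  have pb: "p \<in> bcont" by (rule bcontI[where B=1]) (use pc p01 in auto)
  have ub: "(\<lambda>x. c + B * (1 - p x)) \<in> bcont"
    using bcont_lin[OF bcont_const[of c] bcont_diff[OF bcont_const[of 1] pb], of 1 B] by simp
  have int1: "integrable M (\<lambda>x. c + B * (1 - p x))"
    by (rule bcont_integrable[OF ub finite_measure sM])
  have int2: "integrable M (\<lambda>x. c + B * indicator (UNIV - K) x)"
    using Kb by (intro Bochner_Integration.integrable_add integrable_mult_right) (auto simp: integrable_indicator_iff spM less_top[symmetric])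
  have "(\<integral>x. c + B * (1 - p x) \<partial>M) \<le> (\<integral>x. c + B * indicator (UNIV - K) x \<partial>M)"
  proof (rule integral_mono[OF int1 int2])
    fix x
    have "1 - p x \<le> indicator (UNIV - K) x" using p01 p1 by (cases "x \<in> K") auto
    then show "c + B * (1 - p x) \<le> c + B * indicator (UNIV - K) x" using B by (simp add: mult_left_mono)
  qed
  also have "\<dots> = c + B * measure M (UNIV - K)"
    using Kb by (subst Bochner_Integration.integral_add)
      (auto simp: integrable_indicator_iff pU spM integral_indicator less_top[symmetric])
  finally show ?thesis .
qed

lemma bcont_fst: "g \<in> bcont \<Longrightarrow> (\<lambda>z. g (fst z)) \<in> bcont"
  unfolding bcont_def by (auto intro!: continuous_on_compose2[of UNIV g UNIV fst] continuous_intros)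

lemma bcont_snd: "g \<in> bcont \<Longrightarrow> (\<lambda>z. g (snd z)) \<in> bcont"
  unfolding bcont_def by (auto intro!: continuous_on_compose2[of UNIV g UNIV snd] continuous_intros)

lemma trunc_tail:
  fixes c :: "'c \<Rightarrow> real"
  assumes ci: "integrable M c"
  shows "(\<lambda>n. \<integral>x. max 0 (c x - real n) \<partial>M) \<longlonglongrightarrow> 0"
proof -
  have cm: "c \<in> borel_measurable M" using ci by auto
  have "(\<lambda>n. \<integral>x. max 0 (c x - real n) \<partial>M) \<longlonglongrightarrow> (\<integral>x. 0 \<partial>M)"
  proof (rule integral_dominated_convergence[where w="\<lambda>x. \<bar>c x\<bar>"])
    show "(\<lambda>x. 0::real) \<in> borel_measurable M" by simp
    show "(\<lambda>x. max 0 (c x - real n)) \<in> borel_measurable M" for n using cm by measurable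
    show "integrable M (\<lambda>x. \<bar>c x\<bar>)" using ci by (rule integrable_abs)
    show "AE x in M. norm (max 0 (c x - real n)) \<le> \<bar>c x\<bar>" for n by (rule AE_I2) auto
    show "AE x in M. (\<lambda>n. max 0 (c x - real n)) \<longlonglongrightarrow> 0"
    proof (rule AE_I2)
      fix x
      obtain N :: nat where "c x \<le> real N" using real_arch_simple by blast
      then have "max 0 (c x - real n) = 0" if "n \<ge> N" for n using that by auto
      then show "(\<lambda>n. max 0 (c x - real n)) \<longlonglongrightarrow> 0"
        by (intro tendsto_eventually eventually_sequentiallyI[of N]) simp
    qed
  qed
  then show ?thesis by simp
qed

lemma clamp_diff: "\<bar>f - max (- real n) (min (real n) f)\<bar> = max 0 (\<bar>f\<bar> - real n)"
  by (auto simp: max_def min_def abs_if)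



theorem mainTheorem1:
  fixes x0 :: "'a::polish_space" and y0 :: "'b::polish_space"
    and k :: nat and \<mu> :: "'a measure" and \<nu> :: "'b measure"
    and L :: "('a \<times> 'b \<Rightarrow> real) \<Rightarrow> real"
  assumes "loc_compact_type TYPE('a)" "sigma_compact_type TYPE('a)"
    and "loc_compact_type TYPE('b)" "sigma_compact_type TYPE('b)"
    and "sets \<mu> = sets borel" "finite_measure \<mu>"
    and "\<nu> \<in> Pk (nX y0) k"
    and lin: "\<And>f g a b. f \<in> Cbk (nXY x0 y0) k \<Longrightarrow> g \<in> Cbk (nXY x0 y0) k \<Longrightarrow>
               L (\<lambda>z. a * f z + b * g z) = a * L f + b * L g"
    and cont: "\<And>f e. f \<in> Cbk (nXY x0 y0) k \<Longrightarrow> e > 0 \<Longrightarrow>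
               \<exists>d>0. \<forall>g \<in> Cbk (nXY x0 y0) k.
                 norm_bk (nXY x0 y0) k (\<lambda>z. g z - f z) < d \<longrightarrow> \<bar>L g - L f\<bar> < e"
    and nonneg: "\<And>p. p \<in> Cbk (nXY x0 y0) k \<Longrightarrow> (\<forall>z. p z \<ge> 0) \<Longrightarrow> L p \<ge> 0"
    and marg: "\<And>u v. u \<in> Cbk (nX x0) k \<Longrightarrow> v \<in> Cbk (nX y0) k \<Longrightarrow>
               L (\<lambda>(x, y). u x + v y) = (\<integral>x. u x \<partial>\<mu>) + (\<integral>y. v y \<partial>\<nu>)"
  shows "\<mu> \<in> Pk (nX x0) k \<and>
         (\<exists>\<pi>. \<pi> \<in> Pk (nXY x0 y0) k \<and>
              distr \<pi> borel fst = \<mu> \<and> distr \<pi> borel snd = \<nu> \<and>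
              (\<forall>f \<in> Cbk (nXY x0 y0) k. integrable \<pi> f \<and> L f = (\<integral>z. f z \<partial>\<pi>)))"
proof -
  note lcX = assms(1) and scX = assms(2) and lcY = assms(3) and scY = assms(4)
    and s\<mu> = assms(5) and f\<mu> = assms(6) and \<nu>P = assms(7)
  have s\<nu>: "sets \<nu> = sets borel" and p\<nu>: "prob_space \<nu>" and m\<nu>: "(\<integral>\<^sup>+ y. ennreal (nX y0 y ^ k) \<partial>\<nu>) < \<infinity>"
    using \<nu>P by (auto simp: Pk_def)
  have f\<nu>: "finite_measure \<nu>" using p\<nu> by (rule prob_space.finite_measure)
  have sp\<mu>: "space \<mu> = UNIV" using sets_eq_imp_space_eq[OF s\<mu>] by simp
  have sp\<nu>: "space \<nu> = UNIV" using sets_eq_imp_space_eq[OF s\<nu>] by simp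
  have bC: "f \<in> Cbk (nXY x0 y0) k" if "f \<in> bcont" for f using bcont_Cbk[OF nXY_nonneg that] .
  have bCX: "u \<in> Cbk (nX x0) k" if "u \<in> bcont" for u :: "'a \<Rightarrow> real" using bcont_Cbk[OF nX_nonneg that] .
  have bCY: "v \<in> Cbk (nX y0) k" if "v \<in> bcont" for v :: "'b \<Rightarrow> real" using bcont_Cbk[OF nX_nonneg that] .
  have Ldiff: "L (\<lambda>z. f z - g z) = L f - L g" if "f \<in> Cbk (nXY x0 y0) k" "g \<in> Cbk (nXY x0 y0) k" for f g
    using lin[OF that, of 1 "-1"] by simp
  have Lmono: "L f \<le> L g" if fg: "f \<in> Cbk (nXY x0 y0) k" "g \<in> Cbk (nXY x0 y0) k" and le: "\<And>z. f z \<le> g z" for f g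
  proof -
    have "0 \<le> L (\<lambda>z. g z - f z)"
      using nonneg[of "\<lambda>z. g z - f z"] Cbk_lin[OF fg(2) fg(1) nXY_nonneg, of 1 "-1"] le by simp
    then show ?thesis using Ldiff[OF fg(2) fg(1)] by simp
  qed
  have marg': "L (\<lambda>z. u (fst z) + v (snd z)) = (\<integral>x. u x \<partial>\<mu>) + (\<integral>y. v y \<partial>\<nu>)"
    if "u \<in> Cbk (nX x0) k" "v \<in> Cbk (nX y0) k" for u v
    using marg[OF that] by (simp add: case_prod_unfold)
  have L1: "L (\<lambda>z. 1) = 1"
    using marg'[OF bCX[OF bcont_const] bCY[OF bcont_const], of 0 1] prob_space.prob_space[OF p\<nu>] by (simp add: sp\<nu>)
  have \<mu>1: "measure \<mu> UNIV = 1"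
    using marg'[OF bCX[OF bcont_const] bCY[OF bcont_const], of 1 0] L1 by (simp add: sp\<mu>)
  have p\<mu>: "prob_space \<mu>"
    by (rule prob_spaceI) (simp add: sp\<mu> finite_measure.emeasure_eq_measure[OF f\<mu>] \<mu>1)
  have zY: "(\<lambda>y. 0) \<in> Cbk (nX y0) k" by (rule bCY[OF bcont_const])
  have zX: "(\<lambda>x. 0) \<in> Cbk (nX x0) k" by (rule bCX[OF bcont_const])
  have L_fst: "L (\<lambda>z. u (fst z)) = (\<integral>x. u x \<partial>\<mu>)" if "u \<in> Cbk (nX x0) k" for u
    using marg'[OF that zY] by simp
  have L_snd: "L (\<lambda>z. v (snd z)) = (\<integral>y. v y \<partial>\<nu>)" if "v \<in> Cbk (nX y0) k" for v
    using marg'[OF zX that] by simp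
  have C_fst: "(\<lambda>z. u (fst z)) \<in> Cbk (nXY x0 y0) k" if "u \<in> Cbk (nX x0) k" for u
    using Cbk_prod[OF that zY] by simp
  have C_snd: "(\<lambda>z. v (snd z)) \<in> Cbk (nXY x0 y0) k" if "v \<in> Cbk (nX y0) k" for v
    using Cbk_prod[OF zX that] by simp
  have powC: "(\<lambda>x. nX x0 x ^ k) \<in> Cbk (nX x0) k" for x0 :: "'c::metric_space"
    unfolding Cbk_def using nX_cont[of x0] nX_nonneg[of x0] by (auto intro!: continuous_intros exI[of _ 1])
  have m\<mu>: "(\<integral>\<^sup>+ x. ennreal (nX x0 x ^ k) \<partial>\<mu>) < \<infinity>"
  proof -
    have tb: "(\<lambda>x. min (real n) (nX x0 x ^ k)) \<in> bcont" for n
    proof (rule bcontI[where B="real n"])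
      show "continuous_on UNIV (\<lambda>x. min (real n) (nX x0 x ^ k))" using nX_cont[of x0] by (intro continuous_intros)
      fix x show "\<bar>min (real n) (nX x0 x ^ k)\<bar> \<le> real n" using nX_nonneg[of x0 x] by auto
    qed
    have "(\<integral>\<^sup>+ x. ennreal (nX x0 x ^ k) \<partial>\<mu>) \<le> ennreal (L (\<lambda>z. nX x0 (fst z) ^ k))"
    proof (rule nn_trunc)
      show "(\<lambda>x. nX x0 x ^ k) \<in> borel_measurable \<mu>"
        using nX_cont[of x0] by (auto simp: measurable_cong_sets[OF s\<mu> refl] intro!: borel_measurable_continuous_onI continuous_intros)
      show "0 \<le> nX x0 x ^ k" for x using nX_nonneg[of x0 x] by simp
      fix n
      have a: "(\<integral>\<^sup>+ x. ennreal (min (real n) (nX x0 x ^ k)) \<partial>\<mu>) = ennreal (\<integral>x. min (real n) (nX x0 x ^ k) \<partial>\<mu>)"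
        by (rule nn_integral_eq_integral[OF bcont_integrable[OF tb f\<mu> s\<mu>]]) (auto simp: nX_nonneg)
      have b: "(\<integral>x. min (real n) (nX x0 x ^ k) \<partial>\<mu>) = L (\<lambda>z. min (real n) (nX x0 (fst z) ^ k))"
        using L_fst[OF bCX[OF tb]] by simp
      have c: "L (\<lambda>z. min (real n) (nX x0 (fst z) ^ k)) \<le> L (\<lambda>z. nX x0 (fst z) ^ k)"
        using Lmono[OF C_fst[OF bCX[OF tb]] C_fst[OF powC]] by simp
      show "(\<integral>\<^sup>+ x. ennreal (min (real n) (nX x0 x ^ k)) \<partial>\<mu>) \<le> ennreal (L (\<lambda>z. nX x0 (fst z) ^ k))"
        unfolding a b using c by (rule ennreal_leI)
    qed
    then show ?thesis using le_less_trans by fastforce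
  qed
  have dan: "(\<lambda>n. L (f n)) \<longlonglongrightarrow> 0"
    if fb: "\<forall>n. f n \<in> bcont" and f0: "\<forall>n z. 0 \<le> f n z" and fdec: "\<forall>n z. f (Suc n) z \<le> f n z"
      and flim: "\<forall>z. (\<lambda>n. f n z) \<longlonglongrightarrow> 0" for f :: "nat \<Rightarrow> 'a \<times> 'b \<Rightarrow> real"
  proof (rule LIMSEQ_I)
    fix e :: real assume e: "0 < e"
    obtain B where B: "\<And>z. \<bar>f 0 z\<bar> \<le> B" using fb unfolding bcont_def by blast
    have B0: "0 \<le> B" using B[of undefined] by linarith
    define \<eta> where "\<eta> = e / (3 * (B + 1))"
    have \<eta>0: "0 < \<eta>" using e B0 by (simp add: \<eta>_def)
    have B\<eta>: "B * \<eta> < e / 3"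
    proof -
      have "B * \<eta> = e / 3 * (B / (B + 1))" using B0 by (simp add: \<eta>_def field_simps)
      also have "\<dots> < e / 3 * 1" using B0 e by (intro mult_strict_left_mono) auto
      finally show ?thesis by simp
    qed
    obtain KX where KX: "compact KX" "measure \<mu> (UNIV - KX) < \<eta>" using tight[OF scX f\<mu> s\<mu> \<eta>0] by blast
    obtain KY where KY: "compact KY" "measure \<nu> (UNIV - KY) < \<eta>" using tight[OF scY f\<nu> s\<nu> \<eta>0] by blast
    obtain pX :: "'a \<Rightarrow> real" and KX' where pXall: "compact KX' \<and> continuous_on UNIV pX \<and> (\<forall>z. 0 \<le> pX z \<and> pX z \<le> 1) \<and>
      (\<forall>z\<in>KX. pX z = 1) \<and> (\<forall>z. z \<notin> KX' \<longrightarrow> pX z = 0)"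
      using cutoff[OF lcX KX(1)] by metis
    note pX = conjunct1[OF pXall] conjunct1[OF conjunct2[OF pXall]] conjunct1[OF conjunct2[OF conjunct2[OF pXall]]]
      conjunct1[OF conjunct2[OF conjunct2[OF conjunct2[OF pXall]]]] conjunct2[OF conjunct2[OF conjunct2[OF conjunct2[OF pXall]]]]
    obtain pY :: "'b \<Rightarrow> real" and KY' where pYall: "compact KY' \<and> continuous_on UNIV pY \<and> (\<forall>z. 0 \<le> pY z \<and> pY z \<le> 1) \<and>
      (\<forall>z\<in>KY. pY z = 1) \<and> (\<forall>z. z \<notin> KY' \<longrightarrow> pY z = 0)"
      using cutoff[OF lcY KY(1)] by metis
    note pY = conjunct1[OF pYall] conjunct1[OF conjunct2[OF pYall]] conjunct1[OF conjunct2[OF conjunct2[OF pYall]]]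
      conjunct1[OF conjunct2[OF conjunct2[OF conjunct2[OF pYall]]]] conjunct2[OF conjunct2[OF conjunct2[OF conjunct2[OF pYall]]]]
    have Cc: "compact (KX' \<times> KY')" using pX(1) pY(1) by (rule compact_Times)
    have fc: "\<And>n. continuous_on UNIV (f n)" using fb unfolding bcont_def by blast
    have e3: "0 < e / 3" using e by simp
    obtain N where N: "\<forall>n\<ge>N. \<forall>z\<in>KX' \<times> KY'. f n z < e / 3"
      using dini[OF Cc fc fdec[rule_format] flim[rule_format] e3] by blast
    define u where "u x = e / 3 + B * (1 - pX x)" for x
    define v where "v y = 0 + B * (1 - pY y)" for y
    have pXb: "pX \<in> bcont" by (rule bcontI[where B=1]) (use pX in auto)
    have pYb: "pY \<in> bcont" by (rule bcontI[where B=1]) (use pY in auto)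
    have ub: "u \<in> bcont" unfolding u_def[abs_def]
      using bcont_lin[OF bcont_const[of "e/3"] bcont_diff[OF bcont_const[of 1] pXb], where a=1 and b=B] by simp
    have vb: "v \<in> bcont" unfolding v_def[abs_def]
      using bcont_lin[OF bcont_const[of 0] bcont_diff[OF bcont_const[of 1] pYb], where a=1 and b=B] by simp
    have iu: "(\<integral>x. u x \<partial>\<mu>) \<le> e / 3 + B * measure \<mu> (UNIV - KX)"
      unfolding u_def by (rule cut_int[OF p\<mu> s\<mu> KX(1) pX(2) pX(3) pX(4) B0])
    have iv: "(\<integral>y. v y \<partial>\<nu>) \<le> 0 + B * measure \<nu> (UNIV - KY)"
      unfolding v_def by (rule cut_int[OF p\<nu> s\<nu> KY(1) pY(2) pY(3) pY(4) B0])
    have "L (f n) < e" if "n \<ge> N" for n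
    proof -
      have pw: "f n z \<le> u (fst z) + v (snd z)" for z
      proof (cases "z \<in> KX' \<times> KY'")
        case True
        then have "f n z < e / 3" using N that by blast
        moreover have "0 \<le> B * (1 - pX (fst z))" "0 \<le> B * (1 - pY (snd z))" using B0 pX(3) pY(3) by auto
        ultimately show ?thesis by (simp add: u_def v_def)
      next
        case False
        then have "pX (fst z) = 0 \<or> pY (snd z) = 0" using pX(5) pY(5) by (cases z) auto
        moreover have "f n z \<le> B"
        proof -
          have "decseq (\<lambda>n. f n z)" unfolding decseq_Suc_iff using fdec by blast
          then have "f n z \<le> f 0 z" by (rule decseqD) simp
          then show ?thesis using B[of z] by simp
        qed
        moreover have "0 \<le> B * (1 - pX (fst z))" "0 \<le> B * (1 - pY (snd z))" using B0 pX(3) pY(3) by auto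
        ultimately show ?thesis using e unfolding u_def v_def
        proof (elim disjE)
          assume h: "pX (fst z) = 0" "f n z \<le> B" "0 \<le> B * (1 - pX (fst z))" "0 \<le> B * (1 - pY (snd z))" "0 < e"
          then have "B * (1 - pX (fst z)) = B" by simp
          then show "f n z \<le> e / 3 + B * (1 - pX (fst z)) + (0 + B * (1 - pY (snd z)))" using h by linarith
        next
          assume h: "pY (snd z) = 0" "f n z \<le> B" "0 \<le> B * (1 - pX (fst z))" "0 \<le> B * (1 - pY (snd z))" "0 < e"
          then have "B * (1 - pY (snd z)) = B" by simp
          then show "f n z \<le> e / 3 + B * (1 - pX (fst z)) + (0 + B * (1 - pY (snd z)))" using h by linarith
        qed
      qed
      have "L (f n) \<le> L (\<lambda>z. u (fst z) + v (snd z))"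
        by (rule Lmono[OF bC[OF fb[rule_format]] Cbk_prod[OF bCX[OF ub] bCY[OF vb]] pw])
      also have "\<dots> = (\<integral>x. u x \<partial>\<mu>) + (\<integral>y. v y \<partial>\<nu>)" by (rule marg'[OF bCX[OF ub] bCY[OF vb]])
      also have "\<dots> \<le> e / 3 + B * \<eta> + B * \<eta>"
        using iu iv KX(2) KY(2) B0 by (smt (verit) mult_left_mono)
      also have "\<dots> < e" using B\<eta> by simp
      finally show ?thesis .
    qed
    moreover have "0 \<le> L (f n)" for n using nonneg[OF bC] fb f0 by blast
    ultimately show "\<exists>no. \<forall>n\<ge>no. norm (L (f n) - 0) < e" by auto
  qed
  interpret R: riesz L
  proof
    show "L (\<lambda>z. a * f z + b * g z) = a * L f + b * L g" if "f \<in> bcont" "g \<in> bcont" for f g a b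
      using lin[OF bC[OF that(1)] bC[OF that(2)]] .
    show "0 \<le> L f" if "f \<in> bcont" "\<forall>z. 0 \<le> f z" for f using nonneg[OF bC[OF that(1)]] that(2) by blast
    show "L (\<lambda>z. 1) = 1" by (rule L1)
    show "(\<lambda>n. L (f n)) \<longlonglongrightarrow> 0" if "\<forall>n. f n \<in> bcont" "\<forall>n z. 0 \<le> f n z" "\<forall>n z. f (Suc n) z \<le> f n z"
      "\<forall>z. (\<lambda>n. f n z) \<longlonglongrightarrow> 0" for f using dan[OF that] .
  qed
  obtain \<pi> where s\<pi>: "sets \<pi> = sets borel" and p\<pi>: "prob_space \<pi>" and int\<pi>: "\<And>f. f \<in> bcont \<Longrightarrow> L f = (\<integral>z. f z \<partial>\<pi>)"
    using R.riesz_main by blast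
  have f\<pi>: "finite_measure \<pi>" using p\<pi> by (rule prob_space.finite_measure)
  have sp\<pi>: "space \<pi> = UNIV" using sets_eq_imp_space_eq[OF s\<pi>] by simp
  have fstm: "fst \<in> measurable \<pi> borel"
    by (simp add: measurable_cong_sets[OF s\<pi> refl] borel_measurable_continuous_onI continuous_on_fst continuous_on_id)
  have sndm: "snd \<in> measurable \<pi> borel"
    by (simp add: measurable_cong_sets[OF s\<pi> refl] borel_measurable_continuous_onI continuous_on_snd continuous_on_id)
  have marg1: "distr \<pi> borel fst = \<mu>"
  proof (rule measure_eq_bcont)
    show "finite_measure (distr \<pi> borel fst)" by (rule prob_space.finite_measure[OF prob_space.prob_space_distr[OF p\<pi> fstm]])
    show "finite_measure \<mu>" by (rule f\<mu>)
    show "sets (distr \<pi> borel fst) = sets borel" by simp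
    show "sets \<mu> = sets borel" by (rule s\<mu>)
    fix g :: "'a \<Rightarrow> real" assume g: "g \<in> bcont"
    have "(\<integral>x. g x \<partial>distr \<pi> borel fst) = (\<integral>z. g (fst z) \<partial>\<pi>)"
      by (rule integral_distr[OF fstm bcont_measurable[OF g]])
    also have "\<dots> = L (\<lambda>z. g (fst z))" by (rule int\<pi>[OF bcont_fst[OF g], symmetric])
    also have "\<dots> = (\<integral>x. g x \<partial>\<mu>)" by (rule L_fst[OF bCX[OF g]])
    finally show "(\<integral>x. g x \<partial>distr \<pi> borel fst) = (\<integral>x. g x \<partial>\<mu>)" .
  qed
  have marg2: "distr \<pi> borel snd = \<nu>"
  proof (rule measure_eq_bcont)
    show "finite_measure (distr \<pi> borel snd)" by (rule prob_space.finite_measure[OF prob_space.prob_space_distr[OF p\<pi> sndm]])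
    show "finite_measure \<nu>" by (rule f\<nu>)
    show "sets (distr \<pi> borel snd) = sets borel" by simp
    show "sets \<nu> = sets borel" by (rule s\<nu>)
    fix g :: "'b \<Rightarrow> real" assume g: "g \<in> bcont"
    have "(\<integral>x. g x \<partial>distr \<pi> borel snd) = (\<integral>z. g (snd z) \<partial>\<pi>)"
      by (rule integral_distr[OF sndm bcont_measurable[OF g]])
    also have "\<dots> = L (\<lambda>z. g (snd z))" by (rule int\<pi>[OF bcont_snd[OF g], symmetric])
    also have "\<dots> = (\<integral>x. g x \<partial>\<nu>)" by (rule L_snd[OF bCY[OF g]])
    finally show "(\<integral>x. g x \<partial>distr \<pi> borel snd) = (\<integral>x. g x \<partial>\<nu>)" .
  qed
  define W where "W z = 1 + nXY x0 y0 z ^ k" for z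
  have W1: "1 \<le> W z" for z using nXY_nonneg[of x0 y0 z] by (simp add: W_def)
  have Wc: "continuous_on UNIV W" unfolding W_def[abs_def] using nXY_cont[of x0 y0] by (intro continuous_intros)
  have WC: "W \<in> Cbk (nXY x0 y0) k" unfolding Cbk_def using Wc W1 by (auto simp: W_def intro!: exI[of _ 1])
  have Wm: "W \<in> borel_measurable \<pi>"
    by (simp add: measurable_cong_sets[OF s\<pi> refl] borel_measurable_continuous_onI Wc)
  have Wt: "(\<lambda>z. min (real n) (W z)) \<in> bcont" for n
  proof (rule bcontI[where B="real n"])
    show "continuous_on UNIV (\<lambda>z. min (real n) (W z))" using Wc by (intro continuous_intros)
    fix z show "\<bar>min (real n) (W z)\<bar> \<le> real n" using W1[of z] by auto
  qed
  have nnW: "(\<integral>\<^sup>+ z. ennreal (W z) \<partial>\<pi>) \<le> ennreal (L W)"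
  proof (rule nn_trunc[OF Wm])
    show "0 \<le> W z" for z using W1[of z] by simp
    fix n
    have a: "(\<integral>\<^sup>+ z. ennreal (min (real n) (W z)) \<partial>\<pi>) = ennreal (\<integral>z. min (real n) (W z) \<partial>\<pi>)"
    proof (rule nn_integral_eq_integral[OF bcont_integrable[OF Wt f\<pi> s\<pi>]], rule AE_I2)
      fix z have "0 \<le> W z" using W1[of z] by simp
      then show "0 \<le> min (real n) (W z)" by simp
    qed
    have b: "(\<integral>z. min (real n) (W z) \<partial>\<pi>) = L (\<lambda>z. min (real n) (W z))" by (rule int\<pi>[OF Wt, symmetric])
    have c: "L (\<lambda>z. min (real n) (W z)) \<le> L W" by (rule Lmono[OF bC[OF Wt] WC]) simp
    show "(\<integral>\<^sup>+ z. ennreal (min (real n) (W z)) \<partial>\<pi>) \<le> ennreal (L W)"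
      unfolding a b using c by (rule ennreal_leI)
  qed
  have nnW': "(\<integral>\<^sup>+ z. ennreal (W z) \<partial>\<pi>) < \<infinity>" using nnW le_less_trans by fastforce
  have intW: "integrable \<pi> W"
  proof (rule integrableI_bounded[OF Wm])
    have "(\<integral>\<^sup>+ z. ennreal (norm (W z)) \<partial>\<pi>) = (\<integral>\<^sup>+ z. ennreal (W z) \<partial>\<pi>)"
    proof (intro nn_integral_cong)
      fix z have "0 \<le> W z" using W1[of z] by simp
      then show "ennreal (norm (W z)) = ennreal (W z)" by simp
    qed
    then show "(\<integral>\<^sup>+ z. ennreal (norm (W z)) \<partial>\<pi>) < \<infinity>" using nnW' by simp
  qed
  have m\<pi>: "(\<integral>\<^sup>+ z. ennreal (nXY x0 y0 z ^ k) \<partial>\<pi>) < \<infinity>"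
  proof -
    have "(\<integral>\<^sup>+ z. ennreal (nXY x0 y0 z ^ k) \<partial>\<pi>) \<le> (\<integral>\<^sup>+ z. ennreal (W z) \<partial>\<pi>)"
      by (intro nn_integral_mono ennreal_leI) (simp add: W_def)
    then show ?thesis using nnW' le_less_trans by blast
  qed
  have intdk: "integrable M (\<lambda>x. nX c x ^ k)"
    if sM: "sets M = sets borel" and mM: "(\<integral>\<^sup>+ x. ennreal (nX c x ^ k) \<partial>M) < \<infinity>" for M and c :: "'c::metric_space"
  proof (rule integrableI_bounded)
    show "(\<lambda>x. nX c x ^ k) \<in> borel_measurable M"
      using nX_cont[of c] by (auto simp: measurable_cong_sets[OF sM refl] intro!: borel_measurable_continuous_onI continuous_intros)
    have "(\<integral>\<^sup>+ x. ennreal (norm (nX c x ^ k)) \<partial>M) = (\<integral>\<^sup>+ x. ennreal (nX c x ^ k) \<partial>M)"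
      using nX_nonneg[of c] by (intro nn_integral_cong) auto
    then show "(\<integral>\<^sup>+ x. ennreal (norm (nX c x ^ k)) \<partial>M) < \<infinity>" using mM by simp
  qed
  have intX: "integrable \<mu> (\<lambda>x. nX x0 x ^ k)" by (rule intdk[OF s\<mu> m\<mu>])
  have intY: "integrable \<nu> (\<lambda>y. nX y0 y ^ k)" by (rule intdk[OF s\<nu> m\<nu>])
  have main: "integrable \<pi> f \<and> L f = (\<integral>z. f z \<partial>\<pi>)" if fC: "f \<in> Cbk (nXY x0 y0) k" for f
  proof -
    obtain Cf where fc: "continuous_on UNIV f" and fb: "\<And>z. \<bar>f z\<bar> \<le> Cf * (1 + nXY x0 y0 z ^ k)"
      using fC unfolding Cbk_def by blast
    have Cf0: "0 \<le> Cf"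
    proof -
      have "0 \<le> Cf * (1 + nXY x0 y0 (x0, y0) ^ k)" using fb[of "(x0, y0)"] abs_ge_zero order_trans by blast
      moreover have "1 + nXY x0 y0 (x0, y0) ^ k > 0" using nXY_nonneg[of x0 y0 "(x0, y0)"] by (simp add: add_pos_nonneg)
      ultimately show ?thesis by (simp add: zero_le_mult_iff)
    qed
    have fm: "f \<in> borel_measurable \<pi>"
      by (simp add: measurable_cong_sets[OF s\<pi> refl] borel_measurable_continuous_onI fc)
    have intf: "integrable \<pi> f"
    proof (rule Bochner_Integration.integrable_bound[OF integrable_mult_right[OF intW, of Cf] fm], rule AE_I2)
      fix z show "norm (f z) \<le> norm (Cf * W z)" using fb[of z] Cf0 W1[of z] by (simp add: W_def)
    qed
    define fn where "fn n z = max (- real n) (min (real n) (f z))" for n z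
    have fnb: "fn n \<in> bcont" for n
    proof (rule bcontI[where B="real n"])
      show "continuous_on UNIV (fn n)" unfolding fn_def[abs_def] using fc by (intro continuous_intros)
      fix z show "\<bar>fn n z\<bar> \<le> real n" by (auto simp: fn_def)
    qed
    have lim1: "(\<lambda>n. \<integral>z. fn n z \<partial>\<pi>) \<longlonglongrightarrow> (\<integral>z. f z \<partial>\<pi>)"
    proof (rule integral_dominated_convergence[where w="\<lambda>z. \<bar>f z\<bar>"])
      show "f \<in> borel_measurable \<pi>" by (rule fm)
      show "fn n \<in> borel_measurable \<pi>" for n using bcont_measurable[OF fnb[of n]] by (simp add: measurable_cong_sets[OF s\<pi> refl])
      show "integrable \<pi> (\<lambda>z. \<bar>f z\<bar>)" using intf by (rule integrable_abs)
      show "AE z in \<pi>. norm (fn n z) \<le> \<bar>f z\<bar>" for n by (rule AE_I2) (auto simp: fn_def)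
      show "AE z in \<pi>. (\<lambda>n. fn n z) \<longlonglongrightarrow> f z"
      proof (rule AE_I2)
        fix z
        obtain N :: nat where "\<bar>f z\<bar> \<le> real N" using real_arch_simple by blast
        then have "fn n z = f z" if "n \<ge> N" for n using that by (auto simp: fn_def)
        then show "(\<lambda>n. fn n z) \<longlonglongrightarrow> f z" by (intro tendsto_eventually eventually_sequentiallyI[of N]) simp
      qed
    qed
    define A where "A x = Cf + Cf * 2 ^ k * nX x0 x ^ k" for x
    define Bf where "Bf y = Cf * 2 ^ k * nX y0 y ^ k" for y
    have A0: "0 \<le> A x" for x using Cf0 nX_nonneg[of x0 x] by (simp add: A_def)
    have B0: "0 \<le> Bf y" for y using Cf0 nX_nonneg[of y0 y] by (simp add: Bf_def)
    define u where "u n x = max 0 (2 * A x - real n)" for n x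
    define v where "v n y = max 0 (2 * Bf y - real n)" for n y
    have uC: "u n \<in> Cbk (nX x0) k" for n
    proof -
      have "continuous_on UNIV (u n)" unfolding u_def[abs_def] A_def using nX_cont[of x0] by (intro continuous_intros)
      moreover have "\<bar>u n x\<bar> \<le> (2 * Cf + 2 * Cf * 2 ^ k + real n) * (1 + nX x0 x ^ k)" for x
      proof -
        have d0: "0 \<le> nX x0 x ^ k" using nX_nonneg[of x0 x] by simp
        have "\<bar>u n x\<bar> \<le> 2 * Cf + 2 * Cf * 2 ^ k * nX x0 x ^ k + real n" using A0[of x] by (auto simp: u_def A_def)
        also have "\<dots> \<le> (2 * Cf + 2 * Cf * 2 ^ k + real n) * (1 + nX x0 x ^ k)"
          using Cf0 d0 by (simp add: algebra_simps)
        finally show ?thesis .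
      qed
      ultimately show ?thesis unfolding Cbk_def by blast
    qed
    have vC: "v n \<in> Cbk (nX y0) k" for n
    proof -
      have "continuous_on UNIV (v n)" unfolding v_def[abs_def] Bf_def using nX_cont[of y0] by (intro continuous_intros)
      moreover have "\<bar>v n y\<bar> \<le> (2 * Cf * 2 ^ k + real n) * (1 + nX y0 y ^ k)" for y
      proof -
        have d0: "0 \<le> nX y0 y ^ k" using nX_nonneg[of y0 y] by simp
        have "\<bar>v n y\<bar> \<le> 2 * Cf * 2 ^ k * nX y0 y ^ k + real n" using B0[of y] by (auto simp: v_def Bf_def)
        also have "\<dots> \<le> (2 * Cf * 2 ^ k + real n) * (1 + nX y0 y ^ k)"
          using Cf0 d0 by (simp add: algebra_simps)
        finally show ?thesis .
      qed
      ultimately show ?thesis unfolding Cbk_def by blast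
    qed
    define h where "h n z = u n (fst z) + v n (snd z)" for n z
    have hC: "h n \<in> Cbk (nXY x0 y0) k" for n unfolding h_def[abs_def] by (rule Cbk_prod[OF uC vC])
    have pw: "\<bar>f z - fn n z\<bar> \<le> h n z" for n z
    proof -
      have "\<bar>f z\<bar> \<le> A (fst z) + Bf (snd z)"
      proof -
        have "nXY x0 y0 z ^ k \<le> 2 ^ k * (nX x0 (fst z) ^ k + nX y0 (snd z) ^ k)"
          unfolding nXY_def nX_def by (rule pow_sum_le) auto
        then have "Cf * (1 + nXY x0 y0 z ^ k) \<le> Cf * (1 + 2 ^ k * (nX x0 (fst z) ^ k + nX y0 (snd z) ^ k))"
          using Cf0 by (intro mult_left_mono) auto
        then show ?thesis using fb[of z] by (simp add: A_def Bf_def algebra_simps)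
      qed
      then have "max 0 (\<bar>f z\<bar> - real n) \<le> h n z"
        using A0[of "fst z"] B0[of "snd z"] by (auto simp: h_def u_def v_def max_def)
      then show ?thesis unfolding fn_def clamp_diff .
    qed
    have Lh: "(\<lambda>n. L (h n)) \<longlonglongrightarrow> 0"
    proof -
      have "L (h n) = (\<integral>x. u n x \<partial>\<mu>) + (\<integral>y. v n y \<partial>\<nu>)" for n unfolding h_def by (rule marg'[OF uC vC])
      moreover have "(\<lambda>n. \<integral>x. u n x \<partial>\<mu>) \<longlonglongrightarrow> 0"
      proof -
        have iA: "integrable \<mu> (\<lambda>x. 2 * A x)" unfolding A_def
          using intX finite_measure.integrable_const[OF f\<mu>] by (intro integrable_mult_right Bochner_Integration.integrable_add) auto
        show ?thesis unfolding u_def using trunc_tail[OF iA] .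
      qed
      moreover have "(\<lambda>n. \<integral>y. v n y \<partial>\<nu>) \<longlonglongrightarrow> 0"
      proof -
        have iB: "integrable \<nu> (\<lambda>y. 2 * Bf y)" unfolding Bf_def
          using intY by (intro integrable_mult_right) auto
        show ?thesis unfolding v_def using trunc_tail[OF iB] .
      qed
      ultimately show ?thesis using tendsto_add[of _ 0 _ _ 0] by fastforce
    qed
    have lim2: "(\<lambda>n. L (fn n)) \<longlonglongrightarrow> L f"
    proof -
      have "(\<lambda>n. L (fn n) - L f) \<longlonglongrightarrow> 0"
      proof (rule Lim_null_comparison[OF _ Lh], rule always_eventually, rule allI)
        fix n
        have fnC: "fn n \<in> Cbk (nXY x0 y0) k" by (rule bC[OF fnb])
        have d1: "(\<lambda>z. fn n z - f z) \<in> Cbk (nXY x0 y0) k" using Cbk_lin[OF fnC fC nXY_nonneg, of 1 "-1"] by simp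
        have d2: "(\<lambda>z. f z - fn n z) \<in> Cbk (nXY x0 y0) k" using Cbk_lin[OF fC fnC nXY_nonneg, of 1 "-1"] by simp
        have "L (\<lambda>z. fn n z - f z) \<le> L (h n)" by (rule Lmono[OF d1 hC]) (use pw in \<open>auto simp: abs_le_iff\<close>)
        moreover have "L (\<lambda>z. f z - fn n z) \<le> L (h n)" by (rule Lmono[OF d2 hC]) (use pw in \<open>auto simp: abs_le_iff\<close>)
        ultimately show "norm (L (fn n) - L f) \<le> L (h n)" using Ldiff[OF fnC fC] Ldiff[OF fC fnC] by auto
      qed
      then show ?thesis by (simp add: LIM_zero_iff)
    qed
    have "(\<lambda>n. L (fn n)) = (\<lambda>n. \<integral>z. fn n z \<partial>\<pi>)" using int\<pi>[OF fnb] by simp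
    then have "L f = (\<integral>z. f z \<partial>\<pi>)" using LIMSEQ_unique[OF lim2] lim1 by simp
    then show ?thesis using intf by simp
  qed
  have "\<mu> \<in> Pk (nX x0) k" using s\<mu> p\<mu> m\<mu> by (simp add: Pk_def)
  moreover have "\<pi> \<in> Pk (nXY x0 y0) k" using s\<pi> p\<pi> m\<pi> by (simp add: Pk_def)
  ultimately show ?thesis using marg1 marg2 main by blast
qed


end
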